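(* Fix $n\in\mathbb N$ and $x\in\mathbb P^d_K(\mathbb C_p)$, and let $C=\{U\in T_{O_K/\pi^n}(\Lambda^{(n)}):x\in Y_U\}$ with the induced order. If $C$ is nonempty, its order complex $C^\bullet$ is contractible.
   Context: $K$ finite over $\mathbb Q_p$, $O_K$, uniformizer $\pi$, $O$ the integers of $\mathbb C_p$, $\Lambda=\bigoplus_{i=0}^dO_Ke_i$, $\Lambda^{(n)}=\Lambda/\pi^n\Lambda$. For an $O_K/\pi^n$-submodule $U\subset\Lambda^{(n)}$ let $\mathrm{rk}(U)=\dim_{O_K/\pi}(U+\pi\Lambda^{(n)})/\pi\Lambda^{(n)}$ and $\mathrm{rk}'(U)$ the minimal number of generators. $T_{O_K/\pi^n}(\Lambda^{(n)})$ is the poset under inclusion of submodules $U$ with $\mathrm{rk}(U)\ge1$ and $\mathrm{rk}'(U)\le d$. For $x$ with line $L_x\subset\mathbb C_p^{d+1}$, $\mathrm{red}_n(x)=(L_x\cap(\Lambda\otimes O))\otimes O/\pi^nO$, and $Y_U=\{x:\mathrm{red}_n(x)\subset U\otimes_{O_K/\pi^n}O/\pi^nO\}$. The order complex of a poset has chains $x_0\prec\cdots\prec x_m$ as $m$-simplices. *)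

theory Defs
  imports "HOL-Analysis.Analysis" "HOL-Computational_Algebra.Polynomial" "HOL-Library.Function_Algebras"
begin

definition nonarch_abs :: "('c::field \<Rightarrow> real) \<Rightarrow> bool" where
  "nonarch_abs av \<longleftrightarrow> (\<forall>x. 0 \<le> av x) \<and> (\<forall>x. av x = 0 \<longleftrightarrow> x = 0)
     \<and> (\<forall>x y. av (x * y) = av x * av y) \<and> (\<forall>x y. av (x + y) \<le> max (av x) (av y))"

definition complete_wrt :: "('c::field \<Rightarrow> real) \<Rightarrow> 'c set \<Rightarrow> bool" where
  "complete_wrt av S \<longleftrightarrow>
     (\<forall>f::nat \<Rightarrow> 'c. (\<forall>m. f m \<in> S) \<and> (\<forall>e>0. \<exists>N. \<forall>m\<ge>N. \<forall>k\<ge>N. av (f m - f k) < e)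
        \<longrightarrow> (\<exists>l\<in>S. \<forall>e>0. \<exists>N. \<forall>m\<ge>N. av (f m - l) < e))"

definition field_hom :: "('k::field \<Rightarrow> 'c::field) \<Rightarrow> bool" where
  "field_hom \<iota> \<longleftrightarrow> \<iota> 1 = 1 \<and> (\<forall>x y. \<iota> (x + y) = \<iota> x + \<iota> y) \<and> (\<forall>x y. \<iota> (x * y) = \<iota> x * \<iota> y)"

text \<open>K (embedded into C via \<iota>, with absolute value av restricted along \<iota>) is a finite
  extension of Q_p: a field of characteristic 0 (type class), complete for a discrete
  non-archimedean absolute value with uniformizer piK, and with finite residue field.\<close>
definition p_adic_local_field :: "('k::field_char_0 \<Rightarrow> 'c::field) \<Rightarrow> ('c \<Rightarrow> real) \<Rightarrow> 'k \<Rightarrow> bool" where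
  "p_adic_local_field \<iota> av piK \<longleftrightarrow>
     complete_wrt av (range \<iota>)
     \<and> 0 < av (\<iota> piK) \<and> av (\<iota> piK) < 1
     \<and> (\<forall>x. x \<noteq> 0 \<longrightarrow> (\<exists>k::int. av (\<iota> x) = av (\<iota> piK) powi k))
     \<and> (\<exists>R. finite R \<and> (\<forall>r\<in>R. av (\<iota> r) \<le> 1)
            \<and> (\<forall>x. av (\<iota> x) \<le> 1 \<longrightarrow> (\<exists>r\<in>R. av (\<iota> (x - r)) < 1)))"

definition algebraic_over :: "('k::field \<Rightarrow> 'c::field) \<Rightarrow> 'c \<Rightarrow> bool" where
  "algebraic_over \<iota> y \<longleftrightarrow> (\<exists>q::'k poly. q \<noteq> 0 \<and> poly (map_poly \<iota> q) y = 0)"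

text \<open>C is (a copy of) C_p: complete, algebraically closed, and the algebraic closure of K
  inside C is dense (so C is the completion of an algebraic closure of K).\<close>
definition is_Cp :: "('k::field \<Rightarrow> 'c::field) \<Rightarrow> ('c \<Rightarrow> real) \<Rightarrow> bool" where
  "is_Cp \<iota> av \<longleftrightarrow> complete_wrt av UNIV
     \<and> (\<forall>q::'c poly. degree q > 0 \<longrightarrow> (\<exists>z. poly q z = 0))
     \<and> (\<forall>z e. e > 0 \<longrightarrow> (\<exists>y. algebraic_over \<iota> y \<and> av (z - y) < e))"

text \<open>Lambda = O_K^(d+1), vectors indexed by 0..d (zero beyond d).\<close>
definition Lam :: "('k::field \<Rightarrow> 'c::field) \<Rightarrow> ('c \<Rightarrow> real) \<Rightarrow> nat \<Rightarrow> (nat \<Rightarrow> 'k) set" where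
  "Lam \<iota> av d = {v. (\<forall>i. av (\<iota> (v i)) \<le> 1) \<and> (\<forall>i>d. v i = 0)}"

definition piLam :: "('k::field \<Rightarrow> 'c::field) \<Rightarrow> ('c \<Rightarrow> real) \<Rightarrow> 'k \<Rightarrow> nat \<Rightarrow> nat \<Rightarrow> (nat \<Rightarrow> 'k) set" where
  "piLam \<iota> av piK d m = {(\<lambda>i. piK ^ m * v i) | v. v \<in> Lam \<iota> av d}"

definition OK_span :: "('k::field \<Rightarrow> 'c::field) \<Rightarrow> ('c \<Rightarrow> real) \<Rightarrow> (nat \<Rightarrow> 'k) set \<Rightarrow> (nat \<Rightarrow> 'k) set" where
  "OK_span \<iota> av S = {(\<Sum>s\<in>F. (\<lambda>i. c s * s i)) | F c. finite F \<and> F \<subseteq> S \<and> (\<forall>s\<in>F. av (\<iota> (c s)) \<le> 1)}"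

text \<open>An O_K/pi^n-submodule U of Lambda^(n) is represented by its preimage M in Lambda,
  i.e. an O_K-submodule M with pi^n Lambda \<subseteq> M \<subseteq> Lambda.\<close>
definition lattice_mod :: "('k::field \<Rightarrow> 'c::field) \<Rightarrow> ('c \<Rightarrow> real) \<Rightarrow> 'k \<Rightarrow> nat \<Rightarrow> nat \<Rightarrow> (nat \<Rightarrow> 'k) set \<Rightarrow> bool" where
  "lattice_mod \<iota> av piK d n M \<longleftrightarrow> M \<subseteq> Lam \<iota> av d \<and> piLam \<iota> av piK d n \<subseteq> M
     \<and> 0 \<in> M \<and> (\<forall>u\<in>M. \<forall>v\<in>M. u + v \<in> M)
     \<and> (\<forall>c u. av (\<iota> c) \<le> 1 \<longrightarrow> u \<in> M \<longrightarrow> (\<lambda>i. c * u i) \<in> M)"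

text \<open>Linear independence over the residue field O_K/pi of the reductions of a family S.\<close>
definition red_indep :: "('k::field \<Rightarrow> 'c::field) \<Rightarrow> ('c \<Rightarrow> real) \<Rightarrow> 'k \<Rightarrow> nat \<Rightarrow> (nat \<Rightarrow> 'k) set \<Rightarrow> bool" where
  "red_indep \<iota> av piK d S \<longleftrightarrow>
     (\<forall>c. (\<forall>s\<in>S. av (\<iota> (c s)) \<le> 1) \<longrightarrow> (\<Sum>s\<in>S. (\<lambda>i. c s * s i)) \<in> piLam \<iota> av piK d 1
        \<longrightarrow> (\<forall>s\<in>S. av (\<iota> (c s)) < 1))"

text \<open>rk(U) = dim over O_K/pi of (U + pi Lambda^(n))/pi Lambda^(n).\<close>
definition rk :: "('k::field \<Rightarrow> 'c::field) \<Rightarrow> ('c \<Rightarrow> real) \<Rightarrow> 'k \<Rightarrow> nat \<Rightarrow> (nat \<Rightarrow> 'k) set \<Rightarrow> nat" where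
  "rk \<iota> av piK d M = Max {card S | S. finite S \<and> S \<subseteq> M \<and> red_indep \<iota> av piK d S}"

definition rk' :: "('k::field \<Rightarrow> 'c::field) \<Rightarrow> ('c \<Rightarrow> real) \<Rightarrow> 'k \<Rightarrow> nat \<Rightarrow> nat \<Rightarrow> (nat \<Rightarrow> 'k) set \<Rightarrow> nat" where
  "rk' \<iota> av piK d n M = (LEAST r. \<exists>S. finite S \<and> S \<subseteq> M \<and> card S = r \<and>
       M = {u + w | u w. u \<in> OK_span \<iota> av S \<and> w \<in> piLam \<iota> av piK d n})"

definition Tpos :: "('k::field \<Rightarrow> 'c::field) \<Rightarrow> ('c \<Rightarrow> real) \<Rightarrow> 'k \<Rightarrow> nat \<Rightarrow> nat \<Rightarrow> (nat \<Rightarrow> 'k) set set" where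
  "Tpos \<iota> av piK d n = {M. lattice_mod \<iota> av piK d n M \<and> rk \<iota> av piK d M \<ge> 1 \<and> rk' \<iota> av piK d n M \<le> d}"

text \<open>O-span inside O^(d+1) (O = integers of C_p) of the image of M; this is the
  preimage in O^(d+1) of U \<otimes> O/pi^n O (together with pi^n O^(d+1) \<subseteq> it).\<close>
definition O_span :: "('k::field \<Rightarrow> 'c::field) \<Rightarrow> ('c \<Rightarrow> real) \<Rightarrow> (nat \<Rightarrow> 'k) set \<Rightarrow> (nat \<Rightarrow> 'c) set" where
  "O_span \<iota> av M = {(\<Sum>s\<in>F. (\<lambda>i. c s * \<iota> (s i))) | F c. finite F \<and> F \<subseteq> M \<and> (\<forall>s\<in>F. av (c s) \<le> 1)}"

text \<open>x \<in> Y_U: every element of L_x \<inter> O^(d+1) reduces mod pi^n into U \<otimes> O/pi^n O.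
  x is a nonzero representative vector of the point of P^d.\<close>
definition in_Y :: "('k::field \<Rightarrow> 'c::field) \<Rightarrow> ('c \<Rightarrow> real) \<Rightarrow> 'k \<Rightarrow> nat \<Rightarrow> (nat \<Rightarrow> 'c) \<Rightarrow> (nat \<Rightarrow> 'k) set \<Rightarrow> bool" where
  "in_Y \<iota> av piK n x M \<longleftrightarrow>
     (\<forall>l. (\<forall>i. av (l * x i) \<le> 1) \<longrightarrow>
        (\<exists>w\<in>O_span \<iota> av M. \<forall>i. av (l * x i - w i) \<le> av (\<iota> piK) ^ n))"

text \<open>Points: convex combinations (barycentric coordinates) supported on a nonempty chain.\<close>
definition order_complex_set :: "'a set set \<Rightarrow> ('a set \<Rightarrow> real) set" where
  "order_complex_set P = {f. f \<in> extensional P \<and> (\<forall>U\<in>P. 0 \<le> f U) \<and> sum f P = 1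
      \<and> (\<forall>U\<in>P. \<forall>V\<in>P. f U \<noteq> 0 \<and> f V \<noteq> 0 \<longrightarrow> U \<subseteq> V \<or> V \<subseteq> U)}"

definition order_complex_top :: "'a set set \<Rightarrow> ('a set \<Rightarrow> real) topology" where
  "order_complex_top P = subtopology (product_topology (\<lambda>_. euclideanreal) P) (order_complex_set P)"

end

theory Submission
  imports Defs
begin

lemma na_basic:
  assumes "nonarch_abs w"
  shows na_nonneg: "0 \<le> w x" and na_zero_iff: "w x = 0 \<longleftrightarrow> x = 0"
    and na_mult: "w (x * y) = w x * w y" and na_add: "w (x + y) \<le> max (w x) (w y)"
  using assms unfolding nonarch_abs_def by auto

lemma na_0: "nonarch_abs w \<Longrightarrow> w 0 = 0" using na_zero_iff by blast

lemma na_1: assumes "nonarch_abs w" shows "w 1 = 1"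
proof -
  have "w 1 = w 1 * w 1" using na_mult[OF assms, of 1 1] by simp
  moreover have "w 1 \<noteq> 0" using na_zero_iff[OF assms] by simp
  ultimately show ?thesis by (metis mult_cancel_left1)
qed

lemma na_m1: assumes "nonarch_abs w" shows "w (-1) = 1"
proof -
  have "w ((-1) * (-1)) = w (-1) * w (-1)" by (rule na_mult[OF assms])
  hence "w (-1) * w (-1) = 1" using na_1[OF assms] by simp
  hence "w (-1) ^ 2 = 1" by (simp add: power2_eq_square)
  hence "w (-1) = 1 \<or> w (-1) = -1" using power2_eq_1_iff by blast
  thus ?thesis using na_nonneg[OF assms, of "-1"] by linarith
qed

lemma na_uminus: assumes "nonarch_abs w" shows "w (- x) = w x"
  using na_mult[OF assms, of "-1" x] na_m1[OF assms] by simp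

lemma na_diff: assumes "nonarch_abs w" shows "w (x - y) \<le> max (w x) (w y)"
  using na_add[OF assms, of x "-y"] na_uminus[OF assms, of y] by simp

lemma na_diff_comm: assumes "nonarch_abs w" shows "w (x - y) = w (y - x)"
  using na_uminus[OF assms, of "x - y"] by simp

lemma na_inverse: assumes "nonarch_abs w" shows "w (inverse x) = inverse (w x)"
proof (cases "x = 0")
  case True thus ?thesis using na_0[OF assms] by simp
next
  case False
  have "w x * w (inverse x) = 1" using na_mult[OF assms, of x "inverse x"] na_1[OF assms] False by simp
  thus ?thesis by (metis inverse_unique)
qed

lemma na_divide: assumes "nonarch_abs w" shows "w (x / y) = w x / w y"
  using na_mult[OF assms, of x "inverse y"] na_inverse[OF assms, of y] by (simp add: divide_inverse)

lemma na_power: assumes "nonarch_abs w" shows "w (x ^ k) = w x ^ k"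
  by (induction k) (simp_all add: na_1[OF assms] na_mult[OF assms])

lemma na_add_le: assumes "nonarch_abs w" "w x \<le> B" "w y \<le> B" shows "w (x + y) \<le> B"
  using na_add[OF assms(1), of x y] assms by simp

lemma na_diff_le: assumes "nonarch_abs w" "w x \<le> B" "w y \<le> B" shows "w (x - y) \<le> B"
  using na_diff[OF assms(1), of x y] assms by simp

lemma na_sum_le:
  assumes "nonarch_abs w" "0 \<le> B" "\<forall>s\<in>F. w (f s) \<le> B"
  shows "w (sum f F) \<le> B"
  using assms(3)
proof (induction F rule: infinite_finite_induct)
  case (infinite A) thus ?case using na_0[OF assms(1)] assms(2) by simp
next
  case empty thus ?case using na_0[OF assms(1)] assms(2) by simp
next
  case (insert x F) thus ?case using na_add_le[OF assms(1)] by simp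
qed

lemma na_sum_lt:
  assumes "nonarch_abs w" "0 < B" "\<forall>s\<in>F. w (f s) < B"
  shows "w (sum f F) < B"
  using assms(3)
proof (induction F rule: infinite_finite_induct)
  case (infinite A) thus ?case using na_0[OF assms(1)] assms(2) by simp
next
  case empty thus ?case using na_0[OF assms(1)] assms(2) by simp
next
  case (insert x F)
  have "w (f x + sum f F) \<le> max (w (f x)) (w (sum f F))" using na_add[OF assms(1)] .
  moreover have "max (w (f x)) (w (sum f F)) < B" using insert by simp
  ultimately have "w (f x + sum f F) < B" by (rule le_less_trans)
  thus ?case using insert(1,2) by simp
qed

lemma na_strict: assumes "nonarch_abs w" "w y < w x" shows "w (x + y) = w x"
proof -
  have "w (x + y) \<le> w x" using na_add[OF assms(1), of x y] assms(2) by simp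
  moreover have "w x \<le> max (w (x + y)) (w y)"
    using na_diff[OF assms(1), of "x + y" y] by simp
  ultimately show ?thesis using assms(2) by linarith
qed

lemma fh_basic:
  assumes "field_hom j"
  shows fh_1: "j 1 = 1" and fh_add: "j (x + y) = j x + j y" and fh_mult: "j (x * y) = j x * j y"
  using assms unfolding field_hom_def by auto

lemma fh_0: assumes "field_hom j" shows "j 0 = 0"
proof -
  have "j 0 = j 0 + j 0" using fh_add[OF assms, of 0 0] by simp
  thus ?thesis by (metis add_cancel_right_right)
qed

lemma fh_uminus: assumes "field_hom j" shows "j (- x) = - j x"
  using fh_add[OF assms, of x "-x"] fh_0[OF assms] by (metis add.commute add.right_neutral add_right_cancel right_minus)

lemma fh_diff: assumes "field_hom j" shows "j (x - y) = j x - j y"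
  using fh_add[OF assms, of x "-y"] fh_uminus[OF assms, of y] by simp

lemma fh_sum: assumes "field_hom j" shows "j (sum f F) = (\<Sum>s\<in>F. j (f s))"
  by (induction F rule: infinite_finite_induct) (simp_all add: fh_0[OF assms] fh_add[OF assms])

lemma fh_inverse: assumes "field_hom j" shows "j (inverse x) = inverse (j x)"
proof (cases "x = 0")
  case True thus ?thesis using fh_0[OF assms] by simp
next
  case False
  have "j x * j (inverse x) = 1" using fh_mult[OF assms, of x "inverse x"] fh_1[OF assms] False by simp
  thus ?thesis by (metis inverse_unique)
qed

lemma fh_divide: assumes "field_hom j" shows "j (x / y) = j x / j y"
  using fh_mult[OF assms, of x "inverse y"] fh_inverse[OF assms, of y] by (simp add: divide_inverse)

lemma fh_power: assumes "field_hom j" shows "j (x ^ k) = j x ^ k"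
  by (induction k) (simp_all add: fh_1[OF assms] fh_mult[OF assms])

lemma fh_eq0: assumes "field_hom j" shows "j x = 0 \<longleftrightarrow> x = 0"
proof
  assume "j x = 0"
  show "x = 0"
  proof (rule ccontr)
    assume "x \<noteq> 0"
    hence "j x * j (inverse x) = 1" using fh_mult[OF assms, of x "inverse x"] fh_1[OF assms] by simp
    thus False using \<open>j x = 0\<close> by simp
  qed
qed (simp add: fh_0[OF assms])

lemma fh_id: "field_hom id" by (simp add: field_hom_def)

lemma na_comp: assumes "nonarch_abs w" "field_hom j" shows "nonarch_abs (\<lambda>x. w (j x))"
  using assms unfolding nonarch_abs_def
  by (auto simp: fh_eq0[OF assms(2)] fh_mult[OF assms(2)] fh_add[OF assms(2)])


locale pad =
  fixes \<iota> :: "'k::field_char_0 \<Rightarrow> 'c::field" and av :: "'c \<Rightarrow> real" and piK :: 'k and d :: nat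
  assumes na: "nonarch_abs av" and fh: "field_hom \<iota>" and pl: "p_adic_local_field \<iota> av piK"
begin

definition nK :: "'k \<Rightarrow> real" where "nK x = av (\<iota> x)"

abbreviation q where "q \<equiv> nK piK"

lemma naK: "nonarch_abs nK"
  unfolding nK_def by (rule na_comp[OF na fh])

lemma q_pos: "0 < q" and q_lt1: "q < 1"
  using pl unfolding p_adic_local_field_def nK_def by auto

lemma disc: "x \<noteq> 0 \<Longrightarrow> \<exists>k::int. nK x = q powi k"
  using pl unfolding p_adic_local_field_def nK_def by auto

lemma piK_nz: "piK \<noteq> 0"
  using q_pos na_0[OF naK] by auto

lemma nK_lt1: assumes "nK x < 1" shows "nK x \<le> q"
proof (cases "x = 0")
  case True thus ?thesis using na_0[OF naK] q_pos by simp
next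
  case False
  then obtain k where k: "nK x = q powi k" using disc by blast
  have "k \<ge> 1"
  proof (rule ccontr)
    assume "\<not> k \<ge> 1"
    hence "k \<le> 0" by simp
    hence "q powi 0 \<le> q powi k"
      using power_int_decreasing[of k 0 q] q_pos q_lt1 by simp
    thus False using k assms by simp
  qed
  hence "q powi k \<le> q powi 1"
    using power_int_decreasing[of 1 k q] q_pos q_lt1 by simp
  thus ?thesis using k by simp
qed

lemma exists_max:
  assumes x0: "x0 \<in> I" "x0 \<noteq> 0" and bd: "\<forall>x\<in>I. nK x \<le> B"
  shows "\<exists>a\<in>I. a \<noteq> 0 \<and> (\<forall>x\<in>I. nK x \<le> nK a)"
proof -
  define E where "E = {k::int. \<exists>x\<in>I. x \<noteq> 0 \<and> nK x = q powi k}"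
  obtain k0 where k0: "nK x0 = q powi k0" using disc x0 by blast
  have k0E: "k0 \<in> E" using x0 k0 unfolding E_def by blast
  have q1: "1 < inverse q" using q_pos q_lt1 by (simp add: one_less_inverse)
  obtain N :: nat where N: "B < inverse q ^ N" using real_arch_pow[OF q1] by blast
  have lb: "- int N \<le> k" if kE: "k \<in> E" for k
  proof (rule ccontr)
    assume "\<not> - int N \<le> k"
    hence "k < - int N" by simp
    hence "q powi (- int N) < q powi k"
      using power_int_strict_decreasing[of k "- int N" q] q_pos q_lt1 by simp
    moreover have "q powi (- int N) = inverse q ^ N"
      by (simp add: power_int_minus power_inverse)
    moreover obtain x where "x \<in> I" "nK x = q powi k" using kE unfolding E_def by blast
    ultimately show False using bd N by force
  qed
  define E' where "E' = E \<inter> {- int N..k0}"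
  have fE': "finite E'" unfolding E'_def by simp
  have neE': "E' \<noteq> {}" using k0E lb[OF k0E] unfolding E'_def by auto
  define m where "m = Min E'"
  have mE: "m \<in> E" using Min_in[OF fE' neE'] unfolding m_def E'_def by simp
  have mle: "m \<le> k" if "k \<in> E" for k
  proof (cases "k \<le> k0")
    case True
    hence "k \<in> E'" using that lb[OF that] unfolding E'_def by simp
    thus ?thesis unfolding m_def using fE' by simp
  next
    case False
    have "m \<le> k0" unfolding m_def using fE' k0E lb[OF k0E] unfolding E'_def by simp
    thus ?thesis using False by simp
  qed
  obtain a where a: "a \<in> I" "a \<noteq> 0" "nK a = q powi m" using mE unfolding E_def by blast
  have "nK x \<le> nK a" if "x \<in> I" for x
  proof (cases "x = 0")
    case True thus ?thesis using na_0[OF naK] na_nonneg[OF naK] by simp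
  next
    case False
    then obtain k where k: "nK x = q powi k" using disc by blast
    hence "k \<in> E" using that False unfolding E_def by blast
    hence "m \<le> k" by (rule mle)
    hence "q powi k \<le> q powi m" using power_int_decreasing[of m k q] q_pos q_lt1 by simp
    thus ?thesis using k a by simp
  qed
  thus ?thesis using a by blast
qed

end

lemma sum_app: "(sum f A) x = (\<Sum>a\<in>A. f a x)"
  by (induction A rule: infinite_finite_induct) (simp_all add: plus_fun_def)

context pad begin

definition Vd :: "(nat \<Rightarrow> 'k) set" where "Vd = {v. \<forall>i>d. v i = 0}"

definition is_lat :: "(nat \<Rightarrow> 'k) set \<Rightarrow> bool" where
  "is_lat M \<longleftrightarrow> M \<subseteq> Vd \<and> 0 \<in> M \<and> (\<forall>u\<in>M. \<forall>v\<in>M. u + v \<in> M)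
     \<and> (\<forall>c u. nK c \<le> 1 \<longrightarrow> u \<in> M \<longrightarrow> (\<lambda>i. c * u i) \<in> M)
     \<and> (\<exists>B. \<forall>u\<in>M. \<forall>i. nK (u i) \<le> B)
     \<and> (\<exists>c. c \<noteq> 0 \<and> (\<forall>i\<le>d. (\<lambda>k. if k = i then c else 0) \<in> M))"

lemma lat_add: "is_lat M \<Longrightarrow> u \<in> M \<Longrightarrow> v \<in> M \<Longrightarrow> u + v \<in> M"
  unfolding is_lat_def by blast
lemma lat_smult: "is_lat M \<Longrightarrow> nK c \<le> 1 \<Longrightarrow> u \<in> M \<Longrightarrow> (\<lambda>i. c * u i) \<in> M"
  unfolding is_lat_def by blast
lemma lat_0: "is_lat M \<Longrightarrow> 0 \<in> M"
  unfolding is_lat_def by blast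
lemma lat_Vd: "is_lat M \<Longrightarrow> u \<in> M \<Longrightarrow> i > d \<Longrightarrow> u i = 0"
  unfolding is_lat_def Vd_def by blast

lemma lat_sum:
  assumes "is_lat M" "\<forall>s\<in>F. nK (c s) \<le> 1" "\<forall>s\<in>F. g s \<in> M"
  shows "(\<Sum>s\<in>F. (\<lambda>i. c s * g s i)) \<in> M"
  using assms(2,3)
proof (induction F rule: infinite_finite_induct)
  case (infinite A) thus ?case using lat_0[OF assms(1)] by (simp add: zero_fun_def)
next
  case empty thus ?case using lat_0[OF assms(1)] by (simp add: zero_fun_def)
next
  case (insert x F)
  have "(\<lambda>i. c x * g x i) + (\<Sum>s\<in>F. (\<lambda>i. c s * g s i)) \<in> M"
    by (intro lat_add[OF assms(1)] lat_smult[OF assms(1)]) (use insert in auto)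
  thus ?case by (simp only: sum.insert[OF insert(1,2)])
qed

lemma hermite:
  assumes L: "is_lat M"
  shows "\<exists>b. (\<forall>i\<le>d. b i \<in> M \<and> b i i \<noteq> 0 \<and> (\<forall>k<i. b i k = 0))
           \<and> (\<forall>u\<in>M. \<exists>c. (\<forall>i. nK (c i) \<le> 1) \<and> u = (\<Sum>i\<le>d. (\<lambda>k. c i * b i k)))"
proof -
  obtain B where B: "\<forall>u\<in>M. \<forall>i. nK (u i) \<le> B" using L unfolding is_lat_def by blast
  obtain c0 where c0: "c0 \<noteq> 0" "\<forall>i\<le>d. (\<lambda>k. if k = i then c0 else 0) \<in> M"
    using L unfolding is_lat_def by blast
  have ex: "\<exists>b. b \<in> M \<and> (\<forall>k<i. b k = 0) \<and> b i \<noteq> 0 \<and> (\<forall>u\<in>M. (\<forall>k<i. u k = 0) \<longrightarrow> nK (u i) \<le> nK (b i))"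
    if i: "i \<le> d" for i
  proof -
    define I where "I = (\<lambda>u. u i) ` {u\<in>M. \<forall>k<i. u k = 0}"
    have "c0 \<in> I" unfolding I_def using c0 i
      by (intro image_eqI[of _ _ "(\<lambda>k. if k = i then c0 else 0)"]) auto
    moreover have "\<forall>x\<in>I. nK x \<le> B" unfolding I_def using B by auto
    ultimately obtain a where a: "a \<in> I" "a \<noteq> 0" "\<forall>x\<in>I. nK x \<le> nK a"
      using exists_max c0(1) by blast
    then obtain b where b: "b \<in> M" "\<forall>k<i. b k = 0" "a = b i" unfolding I_def by blast
    show ?thesis
      by (rule exI[of _ b]) (use a b in \<open>auto simp: I_def\<close>)
  qed
  then obtain b where b: "\<And>i. i \<le> d \<Longrightarrow> b i \<in> M \<and> (\<forall>k<i. b i k = 0) \<and> b i i \<noteq> 0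
      \<and> (\<forall>u\<in>M. (\<forall>k<i. u k = 0) \<longrightarrow> nK (u i) \<le> nK (b i i))"
    by metis
  have span: "\<forall>u\<in>M. (\<forall>k<j. u k = 0) \<longrightarrow> (\<exists>c. (\<forall>i. nK (c i) \<le> 1) \<and> u = (\<Sum>i\<in>{j..d}. (\<lambda>k. c i * b i k)))"
    if "j \<le> Suc d" for j
    using that
  proof (induction j rule: inc_induct)
    case base
    show ?case
    proof (intro ballI impI)
      fix u assume u: "u \<in> M" "\<forall>k<Suc d. u k = 0"
      have "u = 0"
      proof
        fix k show "u k = 0 k" using u lat_Vd[OF L u(1), of k] by (cases "k < Suc d") auto
      qed
      thus "\<exists>c. (\<forall>i. nK (c i) \<le> 1) \<and> u = (\<Sum>i\<in>{Suc d..d}. (\<lambda>k. c i * b i k))"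
        by (intro exI[of _ "\<lambda>_. 0"]) (simp add: na_0[OF naK])
    qed
  next
    case (step m)
    show ?case
    proof (intro ballI impI)
      fix u assume u: "u \<in> M" "\<forall>k<m. u k = 0"
      have md: "m \<le> d" using step by simp
      define a where "a = u m / b m m"
      have bm: "b m \<in> M" "\<forall>k<m. b m k = 0" "b m m \<noteq> 0"
        "\<forall>u\<in>M. (\<forall>k<m. u k = 0) \<longrightarrow> nK (u m) \<le> nK (b m m)"
        using b[OF md] by auto
      have "nK (u m) \<le> nK (b m m)" using bm(4) u by blast
      moreover have "nK (b m m) > 0" using bm(3) na_zero_iff[OF naK] na_nonneg[OF naK] by (metis less_eq_real_def)
      ultimately have a1: "nK a \<le> 1" unfolding a_def na_divide[OF naK] by simp
      have a1': "nK (- a) \<le> 1" using a1 na_uminus[OF naK] by simp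
      define u' where "u' = u + (\<lambda>k. (- a) * b m k)"
      have u'M: "u' \<in> M" unfolding u'_def using lat_add[OF L] lat_smult[OF L a1' bm(1)] u(1) by blast
      have u'0: "\<forall>k<Suc m. u' k = 0"
      proof (intro allI impI)
        fix k assume "k < Suc m"
        hence "k < m \<or> k = m" by auto
        thus "u' k = 0" using u bm(2,3) unfolding u'_def a_def by auto
      qed
      obtain c' where c': "\<forall>i. nK (c' i) \<le> 1" "u' = (\<Sum>i\<in>{Suc m..d}. (\<lambda>k. c' i * b i k))"
        using step.IH u'M u'0 by blast
      define c where "c = c'(m := a)"
      have "(\<Sum>i\<in>{m..d}. (\<lambda>k. c i * b i k)) = (\<lambda>k. c m * b m k) + (\<Sum>i\<in>{Suc m..d}. (\<lambda>k. c i * b i k))"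
        using md by (rule sum.atLeast_Suc_atMost)
      also have "(\<Sum>i\<in>{Suc m..d}. (\<lambda>k. c i * b i k)) = (\<Sum>i\<in>{Suc m..d}. (\<lambda>k. c' i * b i k))"
        unfolding c_def by (intro sum.cong) auto
      also have "\<dots> = u'" using c' by simp
      finally have "(\<Sum>i\<in>{m..d}. (\<lambda>k. c i * b i k)) = u"
        unfolding u'_def c_def by (auto simp: fun_eq_iff)
      moreover have "\<forall>i. nK (c i) \<le> 1" unfolding c_def using c'(1) a1 by auto
      ultimately show "\<exists>c. (\<forall>i. nK (c i) \<le> 1) \<and> u = (\<Sum>i\<in>{m..d}. (\<lambda>k. c i * b i k))" by metis
    qed
  qed
  have "\<forall>u\<in>M. \<exists>c. (\<forall>i. nK (c i) \<le> 1) \<and> u = (\<Sum>i\<le>d. (\<lambda>k. c i * b i k))"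
    using span[of 0] by (simp add: atLeast0AtMost)
  moreover have "\<forall>i\<le>d. b i \<in> M \<and> b i i \<noteq> 0 \<and> (\<forall>k<i. b i k = 0)" using b by blast
  ultimately show ?thesis by blast
qed

end

lemma tri_lower:
  fixes A :: "nat \<Rightarrow> nat \<Rightarrow> 'f::field"
  assumes diag: "\<forall>i\<le>d. A i i \<noteq> 0" and low: "\<forall>i\<le>d. \<forall>k\<le>d. i < k \<longrightarrow> A i k = 0"
  shows "\<exists>x. \<forall>i\<le>d. (\<Sum>k\<le>d. A i k * x k) = r i"
proof -
  have "\<exists>x. \<forall>i<m. (\<Sum>k<m. A i k * x k) = r i" if "m \<le> Suc d" for m
    using that
  proof (induction m)
    case 0 thus ?case by simp
  next
    case (Suc m)
    then obtain x where x: "\<forall>i<m. (\<Sum>k<m. A i k * x k) = r i" by auto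
    have md: "m \<le> d" using Suc by simp
    define x' where "x' = x(m := (r m - (\<Sum>k<m. A m k * x k)) / A m m)"
    have s: "(\<Sum>k<m. A i k * x' k) = (\<Sum>k<m. A i k * x k)" for i
      unfolding x'_def by (intro sum.cong) auto
    have "(\<Sum>k<Suc m. A i k * x' k) = r i" if i: "i < Suc m" for i
    proof (cases "i < m")
      case True
      have "A i m = 0" using low md True by auto
      thus ?thesis using x True s by simp
    next
      case False
      hence "i = m" using i by simp
      have am: "A m m \<noteq> 0" using diag md by simp
      have "(\<Sum>k<Suc m. A i k * x' k) = (\<Sum>k<m. A m k * x k) + A m m * x' m"
        using s \<open>i = m\<close> by simp
      also have "A m m * x' m = r m - (\<Sum>k<m. A m k * x k)" unfolding x'_def using am by simp
      finally show ?thesis using \<open>i = m\<close> by simp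
    qed
    thus ?case by blast
  qed
  from this[of "Suc d"] show ?thesis by (simp add: lessThan_Suc_atMost less_Suc_eq_le)
qed

lemma tri_upper:
  fixes A :: "nat \<Rightarrow> nat \<Rightarrow> 'f::field"
  assumes diag: "\<forall>i\<le>d. A i i \<noteq> 0" and up: "\<forall>i\<le>d. \<forall>k\<le>d. k < i \<longrightarrow> A i k = 0"
  shows "\<exists>x. \<forall>i\<le>d. (\<Sum>k\<le>d. A i k * x k) = r i"
proof -
  define A' where "A' = (\<lambda>i k. A (d - i) (d - k))"
  have "\<forall>i\<le>d. A' i i \<noteq> 0"
  proof (intro allI impI)
    fix i assume "i \<le> d"
    have "d - i \<le> d" by simp
    thus "A' i i \<noteq> 0" unfolding A'_def using diag by blast
  qed
  moreover have "\<forall>i\<le>d. \<forall>k\<le>d. i < k \<longrightarrow> A' i k = 0"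
  proof (intro allI impI)
    fix i k assume ik: "i \<le> d" "k \<le> d" "i < k"
    have "d - i \<le> d" "d - k \<le> d" "d - k < d - i" using ik by auto
    thus "A' i k = 0" unfolding A'_def using up by blast
  qed
  ultimately obtain x' where x': "\<forall>i\<le>d. (\<Sum>k\<le>d. A' i k * x' k) = r (d - i)"
    using tri_lower[of d A' "\<lambda>i. r (d - i)"] by blast
  have "(\<Sum>k\<le>d. A i k * x' (d - k)) = r i" if i: "i \<le> d" for i
  proof -
    have "(\<Sum>k\<le>d. A i k * x' (d - k)) = (\<Sum>k\<le>d. A' (d - i) k * x' k)"
    proof (rule sum.reindex_bij_witness[of _ "\<lambda>k. d - k" "\<lambda>k. d - k"])
      fix k assume k: "k \<in> {..d}"
      show "d - (d - k) = k" using k by simp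
      show "d - k \<in> {..d}" by simp
      show "A' (d - i) (d - k) * x' (d - k) = A i k * x' (d - k)"
        unfolding A'_def using i k by simp
    qed simp_all
    also have "\<dots> = r (d - (d - i))" using x' by (meson diff_le_self)
    also have "d - (d - i) = i" using i by simp
    finally show ?thesis .
  qed
  thus ?thesis by (intro exI[of _ "\<lambda>k. x' (d - k)"]) blast
qed


lemma oc_empty:
  assumes "infinite P"
  shows "contractible_space (order_complex_top P)"
proof -
  have "order_complex_set P = {}" using assms by (auto simp: order_complex_set_def)
  hence "order_complex_top P = trivial_topology"
    unfolding order_complex_top_def by (simp add: subtopology_eq_discrete_topology_empty)
  thus ?thesis by simp
qed

lemma oc_cone:
  assumes fin: "finite P" and mP: "m \<in> P" and le: "\<forall>U\<in>P. m \<subseteq> U"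
  shows "contractible_space (order_complex_top P)"
proof -
  define a where "a = restrict (\<lambda>U. if U = m then 1 else (0::real)) P"
  define g where "g = (\<lambda>(t::real, f::'a set \<Rightarrow> real). restrict (\<lambda>U. (1 - t) * f U + t * a U) P)"
  define h where "h = (\<lambda>(t::real, f::'a set \<Rightarrow> real). if t = 0 then f else if t = 1 then a else g (t, f))"
  let ?X = "order_complex_top P"
  have top: "topspace ?X = order_complex_set P"
    unfolding order_complex_top_def
    by (auto simp: order_complex_set_def topspace_subtopology PiE_iff extensional_def)
  have hg: "h z = g z" if "z \<in> topspace (prod_topology (top_of_set {0..1}) ?X)" for z
  proof -
    obtain t f where z: "z = (t, f)" by fastforce
    have "f \<in> order_complex_set P" using that z top by auto
    hence fe: "f \<in> extensional P" by (auto simp: order_complex_set_def)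
    have ae: "a \<in> extensional P" unfolding a_def by simp
    show ?thesis using fe ae unfolding z h_def g_def
      by (auto simp: restrict_def extensional_def fun_eq_iff)
  qed
  have cg: "continuous_map (prod_topology (top_of_set {0..1}) ?X) ?X g"
    unfolding order_complex_top_def
  proof (rule continuous_map_into_subtopology)
    show "continuous_map (prod_topology (top_of_set {0..1}) (subtopology (product_topology (\<lambda>_. euclideanreal) P) (order_complex_set P)))
     (product_topology (\<lambda>_. euclideanreal) P) g"
      unfolding continuous_map_componentwise
    proof (intro conjI ballI)
      show "g ` topspace (prod_topology (top_of_set {0..1}) (subtopology (product_topology (\<lambda>_. euclideanreal) P) (order_complex_set P))) \<subseteq> extensional P"
        unfolding g_def by auto
      fix k assume k: "k \<in> P"
      have e: "(\<lambda>x. g x k) = (\<lambda>x. (1 - fst x) * snd x k + fst x * a k)"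
        using k unfolding g_def by (auto simp: fun_eq_iff)
      let ?S = "subtopology (product_topology (\<lambda>_. euclideanreal) P) (order_complex_set P)"
      have pk: "continuous_map ?S euclideanreal (\<lambda>f. f k)"
        by (intro continuous_map_from_subtopology continuous_map_product_projection k)
      have c2: "continuous_map (prod_topology (top_of_set {0..1}) ?S) euclideanreal (\<lambda>x. snd x k)"
        using continuous_map_compose[OF continuous_map_snd pk] by (simp add: o_def)
      have c1: "continuous_map (prod_topology (top_of_set {0..1}) ?S) euclideanreal fst"
        using continuous_map_fst continuous_map_into_fulltopology by blast
      show "continuous_map (prod_topology (top_of_set {0..1}) ?S) euclideanreal (\<lambda>x. g x k)"
        unfolding e by (intro continuous_intros c1 c2) auto
    qed
    show "g \<in> topspace (prod_topology (top_of_set {0..1}) (subtopology (product_topology (\<lambda>_. euclideanreal) P) (order_complex_set P))) \<rightarrow> order_complex_set P"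
    proof (rule funcsetI)
      fix z assume z: "z \<in> topspace (prod_topology (top_of_set {0..1::real}) (subtopology (product_topology (\<lambda>_. euclideanreal) P) (order_complex_set P)))"
      obtain t f where tf: "z = (t, f)" by fastforce
      have t: "t \<in> topspace (top_of_set {0..1::real})"
        and f: "f \<in> topspace (subtopology (product_topology (\<lambda>_. euclideanreal) P) (order_complex_set P))"
        using z tf by auto
      have t01: "0 \<le> t" "t \<le> 1" using t by auto
      have fo: "f \<in> order_complex_set P" using f by auto
      hence f0: "\<forall>U\<in>P. 0 \<le> f U" and fs: "sum f P = 1"
        and fc: "\<forall>U\<in>P. \<forall>V\<in>P. f U \<noteq> 0 \<and> f V \<noteq> 0 \<longrightarrow> U \<subseteq> V \<or> V \<subseteq> U"
        by (auto simp: order_complex_set_def)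
      have sa: "sum a P = 1" unfolding a_def using fin mP
        by (simp add: sum.If_cases Int_absorb1 cong: sum.cong)
      have "sum (g (t, f)) P = (1 - t) * sum f P + t * sum a P"
        unfolding g_def by (simp add: sum.distrib sum_distrib_left)
      hence s: "sum (g (t, f)) P = 1" using fs sa by simp
      show "g z \<in> order_complex_set P"
        unfolding order_complex_set_def tf
      proof (intro CollectI conjI ballI impI)
        show "g (t, f) \<in> extensional P" unfolding g_def by simp
        show "sum (g (t, f)) P = 1" by (rule s)
      next
        fix U assume "U \<in> P"
        thus "0 \<le> g (t, f) U" using f0 t01 unfolding g_def a_def by auto
      next
        fix U V assume U: "U \<in> P" and V: "V \<in> P" and nz: "g (t, f) U \<noteq> 0 \<and> g (t, f) V \<noteq> 0"
        have "U = m \<or> f U \<noteq> 0" using nz U unfolding g_def a_def by (auto split: if_splits)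
        moreover have "V = m \<or> f V \<noteq> 0" using nz V unfolding g_def a_def by (auto split: if_splits)
        ultimately show "U \<subseteq> V \<or> V \<subseteq> U" using fc U V le by blast
      qed
    qed
  qed
  have ch: "continuous_map (prod_topology (top_of_set {0..1}) ?X) ?X h"
    using cg continuous_map_eq hg by (metis (no_types, lifting))
  have "homotopic_with (\<lambda>x. True) ?X ?X id (\<lambda>x. a)"
    unfolding homotopic_with_def
    by (rule exI[of _ h]) (use ch in \<open>auto simp: h_def\<close>)
  thus ?thesis unfolding contractible_space_def by blast
qed


context pad begin

definition pr :: "(nat \<Rightarrow> 'k) \<Rightarrow> (nat \<Rightarrow> 'k) \<Rightarrow> 'k" where "pr f u = (\<Sum>i\<le>d. f i * u i)"

definition dual :: "(nat \<Rightarrow> 'k) set \<Rightarrow> (nat \<Rightarrow> 'k) set" where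
  "dual M = {f\<in>Vd. \<forall>u\<in>M. nK (pr f u) \<le> 1}"

lemma L:
  fixes j :: "'k \<Rightarrow> 'f::field" and w :: "'f \<Rightarrow> real" and y :: "nat \<Rightarrow> 'f"
  assumes M: "is_lat M" and w: "nonarch_abs w" and j: "field_hom j" and wj: "\<forall>x. w (j x) = nK x"
    and y: "\<forall>i>d. y i = 0" and hyp: "\<forall>f\<in>dual M. w (\<Sum>i\<le>d. j (f i) * y i) \<le> 1"
  shows "\<exists>F c. finite F \<and> F \<subseteq> M \<and> (\<forall>s\<in>F. w (c s) \<le> 1) \<and> y = (\<Sum>s\<in>F. (\<lambda>i. c s * j (s i)))"
proof -
  obtain b where b: "\<forall>i\<le>d. b i \<in> M \<and> b i i \<noteq> 0 \<and> (\<forall>k<i. b i k = 0)"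
    and bspan: "\<forall>u\<in>M. \<exists>c. (\<forall>i. nK (c i) \<le> 1) \<and> u = (\<Sum>i\<le>d. (\<lambda>k. c i * b i k))"
    using hermite[OF M] by blast
  have bd: "b i k = 0" if "i \<le> d" "k > d" for i k
    using lat_Vd[OF M, of "b i" k] b that by blast
  have exg: "\<exists>g. g \<in> Vd \<and> (\<forall>i\<le>d. pr g (b i) = (if i = jj then 1 else 0))" if jj: "jj \<le> d" for jj
  proof -
    have "\<exists>x. \<forall>i\<le>d. (\<Sum>k\<le>d. b i k * x k) = (if i = jj then 1 else 0)"
      by (rule tri_upper) (use b in auto)
    then obtain x where x: "\<forall>i\<le>d. (\<Sum>k\<le>d. b i k * x k) = (if i = jj then 1 else 0)" by blast
    define g where "g = (\<lambda>k. if k \<le> d then x k else 0)"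
    have "g \<in> Vd" unfolding g_def Vd_def by auto
    moreover have "pr g (b i) = (if i = jj then 1 else 0)" if "i \<le> d" for i
    proof -
      have "pr g (b i) = (\<Sum>k\<le>d. b i k * x k)" unfolding pr_def g_def
        by (intro sum.cong) (auto simp: mult.commute)
      thus ?thesis using x that by simp
    qed
    ultimately show ?thesis by blast
  qed
  then obtain g where g: "\<And>jj. jj \<le> d \<Longrightarrow> g jj \<in> Vd \<and> (\<forall>i\<le>d. pr (g jj) (b i) = (if i = jj then 1 else 0))"
    by metis
  have gdual: "g jj \<in> dual M" if jj: "jj \<le> d" for jj
    unfolding dual_def
  proof (intro CollectI conjI ballI)
    show "g jj \<in> Vd" using g[OF jj] by blast
    fix u assume u: "u \<in> M"
    then obtain c where c: "\<forall>i. nK (c i) \<le> 1" "u = (\<Sum>i\<le>d. (\<lambda>k. c i * b i k))" using bspan by blast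
    have "pr (g jj) u = (\<Sum>k\<le>d. g jj k * (\<Sum>i\<le>d. c i * b i k))"
      unfolding pr_def c(2) by (simp add: sum_app)
    also have "\<dots> = (\<Sum>k\<le>d. \<Sum>i\<le>d. c i * (g jj k * b i k))"
      by (simp add: sum_distrib_left mult.left_commute)
    also have "\<dots> = (\<Sum>i\<le>d. \<Sum>k\<le>d. c i * (g jj k * b i k))" by (rule sum.swap)
    also have "\<dots> = (\<Sum>i\<le>d. c i * pr (g jj) (b i))" by (simp add: pr_def sum_distrib_left)
    also have "\<dots> = (\<Sum>i\<le>d. if i = jj then c i else 0)"
      using g[OF jj] by (intro sum.cong) auto
    also have "\<dots> = c jj" using jj by simp
    finally show "nK (pr (g jj) u) \<le> 1" using c(1) by simp
  qed
  have "\<exists>c. \<forall>k\<le>d. (\<Sum>i\<le>d. j (b i k) * c i) = y k"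
    by (rule tri_lower) (use b in \<open>auto simp: fh_eq0[OF j] fh_0[OF j]\<close>)
  then obtain c where c: "\<forall>k\<le>d. (\<Sum>i\<le>d. j (b i k) * c i) = y k" by blast
  have cbd: "w (c jj) \<le> 1" if jj: "jj \<le> d" for jj
  proof -
    have "(\<Sum>k\<le>d. j (g jj k) * y k) = (\<Sum>k\<le>d. j (g jj k) * (\<Sum>i\<le>d. j (b i k) * c i))"
      using c by (intro sum.cong) auto
    also have "\<dots> = (\<Sum>k\<le>d. \<Sum>i\<le>d. c i * (j (g jj k) * j (b i k)))"
      by (simp add: sum_distrib_left mult.left_commute mult.commute)
    also have "\<dots> = (\<Sum>i\<le>d. \<Sum>k\<le>d. c i * (j (g jj k) * j (b i k)))" by (rule sum.swap)
    also have "\<dots> = (\<Sum>i\<le>d. c i * j (pr (g jj) (b i)))"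
      by (simp add: pr_def sum_distrib_left fh_sum[OF j] fh_mult[OF j])
    also have "\<dots> = (\<Sum>i\<le>d. if i = jj then c i else 0)"
      using g[OF jj] by (intro sum.cong) (auto simp: fh_0[OF j] fh_1[OF j])
    also have "\<dots> = c jj" using jj by simp
    finally show ?thesis using hyp gdual[OF jj] by metis
  qed
  have yrep: "y = (\<Sum>i\<le>d. (\<lambda>k. c i * j (b i k)))"
  proof
    fix k
    show "y k = (\<Sum>i\<le>d. (\<lambda>k. c i * j (b i k))) k"
    proof (cases "k \<le> d")
      case True thus ?thesis using c by (simp add: sum_app mult.commute)
    next
      case False thus ?thesis using y bd by (simp add: sum_app fh_0[OF j])
    qed
  qed
  have inj: "inj_on b {..d}"
  proof (rule inj_onI)
    fix i i' assume i: "i \<in> {..d}" and i': "i' \<in> {..d}" and eq: "b i = b i'"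
    show "i = i'"
    proof (rule ccontr)
      assume "i \<noteq> i'"
      hence "i < i' \<or> i' < i" by auto
      thus False using b i i' eq by (metis atMost_iff)
    qed
  qed
  define cc where "cc = (\<lambda>s. c (the_inv_into {..d} b s))"
  have "(\<Sum>s\<in>b ` {..d}. (\<lambda>k. cc s * j (s k))) = (\<Sum>i\<le>d. (\<lambda>k. cc (b i) * j (b i k)))"
    by (rule sum.reindex[OF inj, unfolded o_def])
  also have "\<dots> = (\<Sum>i\<le>d. (\<lambda>k. c i * j (b i k)))"
    unfolding cc_def using the_inv_into_f_f[OF inj] by (intro sum.cong) auto
  finally have rep: "y = (\<Sum>s\<in>b ` {..d}. (\<lambda>k. cc s * j (s k)))" using yrep by simp
  show ?thesis
  proof (intro exI conjI)
    show "finite (b ` {..d})" by simp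
    show "b ` {..d} \<subseteq> M" using b by auto
    show "\<forall>s\<in>b ` {..d}. w (cc s) \<le> 1"
      unfolding cc_def using the_inv_into_f_f[OF inj] cbd by auto
  qed (rule rep)
qed

end

context pad begin

lemma nK_0: "nK 0 = 0" using na_0[OF naK] .
lemma nK_1: "nK 1 = 1" using na_1[OF naK] .
lemma nK_ge0: "0 \<le> nK x" using na_nonneg[OF naK] .

lemma e_Lam: "(\<lambda>k. if k = i then 1 else 0) \<in> Lam \<iota> av d" if "i \<le> d"
  using that nK_0 nK_1 unfolding Lam_def nK_def[symmetric] by auto

lemma Lam_nK: "v \<in> Lam \<iota> av d \<Longrightarrow> nK (v i) \<le> 1"
  unfolding Lam_def nK_def by auto

lemma Lam_Vd: "v \<in> Lam \<iota> av d \<Longrightarrow> i > d \<Longrightarrow> v i = 0"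
  unfolding Lam_def by auto

lemma pie_in:
  assumes "lattice_mod \<iota> av piK d n M" "i \<le> d"
  shows "(\<lambda>k. if k = i then piK ^ n else 0) \<in> M"
proof -
  have "(\<lambda>k. piK ^ n * (if k = i then 1 else 0)) \<in> piLam \<iota> av piK d n"
    unfolding piLam_def by (intro CollectI exI[of _ "\<lambda>k. if k = i then 1 else 0"] conjI refl e_Lam[OF assms(2)])
  moreover have "(\<lambda>k. piK ^ n * (if k = i then 1 else 0)) = (\<lambda>k. if k = i then piK ^ n else 0)"
    by auto
  ultimately show ?thesis using assms(1) unfolding lattice_mod_def by auto
qed

lemma lm_lat: assumes "lattice_mod \<iota> av piK d n M" shows "is_lat M"
  unfolding is_lat_def
proof (intro conjI)
  show "M \<subseteq> Vd" using assms unfolding lattice_mod_def Lam_def Vd_def by auto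
  show "\<exists>B. \<forall>u\<in>M. \<forall>i. nK (u i) \<le> B"
  proof (intro exI ballI allI)
    fix u i assume "u \<in> M"
    hence "u \<in> Lam \<iota> av d" using assms unfolding lattice_mod_def by blast
    thus "nK (u i) \<le> 1" by (rule Lam_nK)
  qed
  show "\<exists>c. c \<noteq> 0 \<and> (\<forall>i\<le>d. (\<lambda>k. if k = i then c else 0) \<in> M)"
  proof (intro exI[of _ "piK ^ n"] conjI allI impI)
    show "piK ^ n \<noteq> 0" using piK_nz by simp
    fix i assume "i \<le> d"
    thus "(\<lambda>k. if k = i then piK ^ n else 0) \<in> M" by (rule pie_in[OF assms])
  qed
next
  show "0 \<in> M" using assms unfolding lattice_mod_def by blast
next
  show "\<forall>u\<in>M. \<forall>v\<in>M. u + v \<in> M" using assms unfolding lattice_mod_def by blast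
next
  show "\<forall>c u. nK c \<le> 1 \<longrightarrow> u \<in> M \<longrightarrow> (\<lambda>i. c * u i) \<in> M"
    using assms unfolding lattice_mod_def nK_def by blast
qed

lemma lm_int: "lattice_mod \<iota> av piK d n U \<Longrightarrow> lattice_mod \<iota> av piK d n V \<Longrightarrow> lattice_mod \<iota> av piK d n (U \<inter> V)"
  unfolding lattice_mod_def by auto

lemma pr_comm: "pr f u = pr u f" unfolding pr_def by (simp add: mult.commute)

lemma pr_add: "pr (f + g) u = pr f u + pr g u" unfolding pr_def by (simp add: sum.distrib distrib_right)

lemma pr_smult: "pr (\<lambda>i. c * f i) u = c * pr f u" unfolding pr_def by (simp add: sum_distrib_left mult.assoc)

lemma pr_e: "i \<le> d \<Longrightarrow> pr f (\<lambda>k. if k = i then c else 0) = f i * c"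
  unfolding pr_def by (simp add: if_distrib cong: if_cong)

lemma small_c: "\<exists>c. c \<noteq> 0 \<and> nK c * B \<le> 1"
proof -
  have ip: "0 < inverse (max B 1)" by simp
  obtain m where m: "q ^ m < inverse (max B 1)"
    using real_arch_pow_inv[OF ip q_lt1] by blast
  have "nK (piK ^ m) = q ^ m" unfolding nK_def by (simp add: fh_power[OF fh] na_power[OF na])
  moreover have "q ^ m * B \<le> 1"
  proof -
    have mp: "0 < max B 1" by simp
    have "q ^ m * max B 1 \<le> inverse (max B 1) * max B 1"
      using m mp by (intro mult_right_mono) auto
    also have "\<dots> = 1" using mp by simp
    finally have "q ^ m * max B 1 \<le> 1" .
    moreover have "q ^ m * B \<le> q ^ m * max B 1" using q_pos by (intro mult_left_mono) auto
    ultimately show ?thesis by linarith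
  qed
  ultimately show ?thesis using piK_nz by (intro exI[of _ "piK ^ m"]) auto
qed

lemma dual_lat: assumes M: "is_lat M" shows "is_lat (dual M)"
  unfolding is_lat_def
proof (intro conjI)
  show "dual M \<subseteq> Vd" unfolding dual_def by auto
  show "0 \<in> dual M" unfolding dual_def Vd_def pr_def using nK_0 by auto
  show "\<forall>u\<in>dual M. \<forall>v\<in>dual M. u + v \<in> dual M"
  proof (intro ballI)
    fix u v assume u: "u \<in> dual M" and v: "v \<in> dual M"
    show "u + v \<in> dual M" unfolding dual_def
    proof (intro CollectI conjI ballI)
      show "u + v \<in> Vd" using u v unfolding dual_def Vd_def by simp
      fix w assume "w \<in> M"
      hence "nK (pr u w) \<le> 1" "nK (pr v w) \<le> 1" using u v unfolding dual_def by auto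
      thus "nK (pr (u + v) w) \<le> 1" unfolding pr_add by (rule na_add_le[OF naK])
    qed
  qed
  show "\<forall>c u. nK c \<le> 1 \<longrightarrow> u \<in> dual M \<longrightarrow> (\<lambda>i. c * u i) \<in> dual M"
  proof (intro allI impI)
    fix c u assume c: "nK c \<le> 1" and u: "u \<in> dual M"
    show "(\<lambda>i. c * u i) \<in> dual M" unfolding dual_def
    proof (intro CollectI conjI ballI)
      show "(\<lambda>i. c * u i) \<in> Vd" using u unfolding dual_def Vd_def by simp
      fix w assume "w \<in> M"
      hence "nK (pr u w) \<le> 1" using u unfolding dual_def by auto
      hence "nK c * nK (pr u w) \<le> 1" using c nK_ge0 by (intro mult_le_one) auto
      thus "nK (pr (\<lambda>i. c * u i) w) \<le> 1" unfolding pr_smult by (simp add: na_mult[OF naK])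
    qed
  qed
  obtain c0 where c0: "c0 \<noteq> 0" "\<forall>i\<le>d. (\<lambda>k. if k = i then c0 else 0) \<in> M"
    using M unfolding is_lat_def by blast
  have c0p: "nK c0 > 0" using c0(1) nK_ge0 na_zero_iff[OF naK] by (metis less_eq_real_def)
  show "\<exists>B. \<forall>u\<in>dual M. \<forall>i. nK (u i) \<le> B"
  proof (intro exI ballI allI)
    fix f i assume f: "f \<in> dual M"
    show "nK (f i) \<le> inverse (nK c0)"
    proof (cases "i \<le> d")
      case True
      have "nK (pr f (\<lambda>k. if k = i then c0 else 0)) \<le> 1" using f c0 True unfolding dual_def by auto
      hence "nK (f i) * nK c0 \<le> 1" using pr_e[OF True] na_mult[OF naK] by simp
      thus ?thesis using c0p by (simp add: field_simps)
    next
      case False thus ?thesis using f c0p nK_0 unfolding dual_def Vd_def by auto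
    qed
  qed
  obtain B where B: "\<forall>u\<in>M. \<forall>i. nK (u i) \<le> B" using M unfolding is_lat_def by blast
  have B0: "0 \<le> B" using B lat_0[OF M] nK_0 by force
  obtain c where c: "c \<noteq> 0" "nK c * B \<le> 1" using small_c by blast
  show "\<exists>c. c \<noteq> 0 \<and> (\<forall>i\<le>d. (\<lambda>k. if k = i then c else 0) \<in> dual M)"
  proof (intro exI conjI allI impI)
    fix i assume i: "i \<le> d"
    show "(\<lambda>k. if k = i then c else 0) \<in> dual M"
      unfolding dual_def
    proof (intro CollectI conjI ballI)
      show "(\<lambda>k. if k = i then c else 0) \<in> Vd" using i unfolding Vd_def by auto
      fix u assume u: "u \<in> M"
      have "pr (\<lambda>k. if k = i then c else 0) u = c * u i"
        using pr_e[OF i, of u c] pr_comm[of "\<lambda>k. if k = i then c else 0" u] by (simp add: mult.commute)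
      hence "nK (pr (\<lambda>k. if k = i then c else 0) u) = nK c * nK (u i)" by (simp add: na_mult[OF naK])
      also have "\<dots> \<le> nK c * B" using B u nK_ge0 by (intro mult_left_mono) auto
      finally show "nK (pr (\<lambda>k. if k = i then c else 0) u) \<le> 1" using c by simp
    qed
  qed (rule c(1))
qed

definition lsum :: "(nat \<Rightarrow> 'k) set \<Rightarrow> (nat \<Rightarrow> 'k) set \<Rightarrow> (nat \<Rightarrow> 'k) set" where
  "lsum A B = {a + b | a b. a \<in> A \<and> b \<in> B}"

lemma lsum_lat: assumes A: "is_lat A" and B: "is_lat B" shows "is_lat (lsum A B)"
  unfolding is_lat_def
proof (intro conjI)
  show "lsum A B \<subseteq> Vd"
  proof
    fix u assume "u \<in> lsum A B"
    then obtain a b where ab: "u = a + b" "a \<in> A" "b \<in> B" unfolding lsum_def by blast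
    have "a \<in> Vd" "b \<in> Vd" using ab A B unfolding is_lat_def by auto
    thus "u \<in> Vd" using ab(1) unfolding Vd_def by simp
  qed
  have "0 + 0 \<in> lsum A B" using lat_0[OF A] lat_0[OF B] unfolding lsum_def by blast
  thus "0 \<in> lsum A B" by simp
  show "\<forall>u\<in>lsum A B. \<forall>v\<in>lsum A B. u + v \<in> lsum A B"
  proof (intro ballI)
    fix u v assume "u \<in> lsum A B" "v \<in> lsum A B"
    then obtain a b a' b' where ab: "u = a + b" "v = a' + b'" "a \<in> A" "b \<in> B" "a' \<in> A" "b' \<in> B"
      unfolding lsum_def by blast
    have e: "u + v = (a + a') + (b + b')" unfolding ab(1,2) by (simp add: algebra_simps)
    have "a + a' \<in> A" "b + b' \<in> B" using lat_add[OF A] lat_add[OF B] ab by auto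
    thus "u + v \<in> lsum A B" unfolding lsum_def e by blast
  qed
  show "\<forall>c u. nK c \<le> 1 \<longrightarrow> u \<in> lsum A B \<longrightarrow> (\<lambda>i. c * u i) \<in> lsum A B"
  proof (intro allI impI)
    fix c u assume c: "nK c \<le> 1" and "u \<in> lsum A B"
    then obtain a b where ab: "u = a + b" "a \<in> A" "b \<in> B" unfolding lsum_def by blast
    have "(\<lambda>i. c * u i) = (\<lambda>i. c * a i) + (\<lambda>i. c * b i)" unfolding ab(1) by (simp add: fun_eq_iff distrib_left)
    thus "(\<lambda>i. c * u i) \<in> lsum A B" unfolding lsum_def using lat_smult[OF A c] lat_smult[OF B c] ab by blast
  qed
  obtain BA where BA: "\<forall>u\<in>A. \<forall>i. nK (u i) \<le> BA" using A unfolding is_lat_def by blast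
  obtain BB where BB: "\<forall>u\<in>B. \<forall>i. nK (u i) \<le> BB" using B unfolding is_lat_def by blast
  show "\<exists>C. \<forall>u\<in>lsum A B. \<forall>i. nK (u i) \<le> C"
  proof (intro exI ballI allI)
    fix u i assume "u \<in> lsum A B"
    then obtain a b where ab: "u = a + b" "a \<in> A" "b \<in> B" unfolding lsum_def by blast
    have ui: "u i = a i + b i" using ab by simp
    have "nK (a i) \<le> max BA BB" "nK (b i) \<le> max BA BB" using BA BB ab by (auto simp: le_max_iff_disj)
    thus "nK (u i) \<le> max BA BB" unfolding ui by (rule na_add_le[OF naK])
  qed
  obtain c where c: "c \<noteq> 0" "\<forall>i\<le>d. (\<lambda>k. if k = i then c else 0) \<in> A" using A unfolding is_lat_def by blast
  show "\<exists>c. c \<noteq> 0 \<and> (\<forall>i\<le>d. (\<lambda>k. if k = i then c else 0) \<in> lsum A B)"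
  proof (intro exI conjI allI impI)
    fix i assume "i \<le> d"
    hence "(\<lambda>k. if k = i then c else 0) + 0 \<in> lsum A B" using c lat_0[OF B] unfolding lsum_def by blast
    thus "(\<lambda>k. if k = i then c else 0) \<in> lsum A B" by simp
  qed (rule c(1))
qed

lemma ddual:
  assumes M: "is_lat M" and u: "u \<in> Vd" and h: "\<forall>f\<in>dual M. nK (pr f u) \<le> 1"
  shows "u \<in> M"
proof -
  have "\<exists>F c. finite F \<and> F \<subseteq> M \<and> (\<forall>s\<in>F. nK (c s) \<le> 1) \<and> u = (\<Sum>s\<in>F. (\<lambda>i. c s * id (s i)))"
    by (rule L[OF M naK fh_id]) (use u h in \<open>auto simp: Vd_def pr_def\<close>)
  then obtain F c where Fc: "finite F" "F \<subseteq> M" "\<forall>s\<in>F. nK (c s) \<le> 1" "u = (\<Sum>s\<in>F. (\<lambda>i. c s * id (s i)))"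
    by blast
  have "(\<Sum>s\<in>F. (\<lambda>i. c s * s i)) \<in> M" using lat_sum[OF M, of F c "\<lambda>s. s"] Fc by blast
  moreover have "u = (\<Sum>s\<in>F. (\<lambda>i. c s * s i))" using Fc(4) by simp
  ultimately show ?thesis by simp
qed

lemma dual_split:
  assumes U: "is_lat U" and V: "is_lat V" and f: "f \<in> dual (U \<inter> V)"
  shows "\<exists>g\<in>dual U. \<exists>h\<in>dual V. f = g + h"
proof -
  define N where "N = lsum (dual U) (dual V)"
  have N: "is_lat N" unfolding N_def by (intro lsum_lat dual_lat U V)
  have "f \<in> N"
  proof (rule ddual[OF N])
    show "f \<in> Vd" using f unfolding dual_def by auto
    show "\<forall>\<phi>\<in>dual N. nK (pr \<phi> f) \<le> 1"
    proof
      fix \<phi> assume \<phi>: "\<phi> \<in> dual N"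
      have inU: "\<phi> \<in> U"
      proof (rule ddual[OF U])
        show "\<phi> \<in> Vd" using \<phi> unfolding dual_def by auto
        show "\<forall>g\<in>dual U. nK (pr g \<phi>) \<le> 1"
        proof
          fix g assume "g \<in> dual U"
          hence "g + 0 \<in> N" unfolding N_def lsum_def using lat_0[OF dual_lat[OF V]] by blast
          hence "nK (pr \<phi> (g + 0)) \<le> 1" using \<phi> unfolding dual_def by blast
          thus "nK (pr g \<phi>) \<le> 1" by (simp add: pr_comm[of g \<phi>])
        qed
      qed
      have inV: "\<phi> \<in> V"
      proof (rule ddual[OF V])
        show "\<phi> \<in> Vd" using \<phi> unfolding dual_def by auto
        show "\<forall>g\<in>dual V. nK (pr g \<phi>) \<le> 1"
        proof
          fix g assume "g \<in> dual V"
          hence "0 + g \<in> N" unfolding N_def lsum_def using lat_0[OF dual_lat[OF U]] by blast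
          hence "nK (pr \<phi> (0 + g)) \<le> 1" using \<phi> unfolding dual_def by blast
          thus "nK (pr g \<phi>) \<le> 1" by (simp add: pr_comm[of g \<phi>])
        qed
      qed
      have "nK (pr f \<phi>) \<le> 1" using f inU inV unfolding dual_def by blast
      thus "nK (pr \<phi> f) \<le> 1" by (simp add: pr_comm[of f \<phi>])
    qed
  qed
  thus ?thesis unfolding N_def lsum_def by blast
qed

end

context pad begin

lemma nK_pow: "nK (piK ^ n) = q ^ n"
  unfolding nK_def by (simp add: fh_power[OF fh] na_power[OF na])

lemma pair_bound:
  assumes LM: "lattice_mod \<iota> av piK d n M" and g: "g \<in> dual M"
    and w1: "w1 \<in> O_span \<iota> av M" and yw: "\<forall>i. av (y i - w1 i) \<le> q ^ n"
  shows "av (\<Sum>i\<le>d. \<iota> (g i) * y i) \<le> 1"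
proof -
  obtain F c where Fc: "finite F" "F \<subseteq> M" "\<forall>s\<in>F. av (c s) \<le> 1"
    "w1 = (\<Sum>s\<in>F. (\<lambda>i. c s * \<iota> (s i)))"
    using w1 unfolding O_span_def by blast
  have s1: "(\<Sum>i\<le>d. \<iota> (g i) * w1 i) = (\<Sum>s\<in>F. c s * \<iota> (pr g s))"
  proof -
    have "(\<Sum>i\<le>d. \<iota> (g i) * w1 i) = (\<Sum>i\<le>d. \<Sum>s\<in>F. c s * (\<iota> (g i) * \<iota> (s i)))"
      unfolding Fc(4) sum_app by (simp add: sum_distrib_left mult.left_commute)
    also have "\<dots> = (\<Sum>s\<in>F. \<Sum>i\<le>d. c s * (\<iota> (g i) * \<iota> (s i)))" by (rule sum.swap)
    also have "\<dots> = (\<Sum>s\<in>F. c s * \<iota> (pr g s))"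
      by (simp add: pr_def sum_distrib_left fh_sum[OF fh] fh_mult[OF fh])
    finally show ?thesis .
  qed
  have b1: "av (\<Sum>i\<le>d. \<iota> (g i) * w1 i) \<le> 1"
    unfolding s1
  proof (rule na_sum_le[OF na], simp, intro ballI)
    fix s assume s: "s \<in> F"
    have "nK (pr g s) \<le> 1" using g s Fc(2) unfolding dual_def by auto
    hence "av (\<iota> (pr g s)) \<le> 1" unfolding nK_def .
    thus "av (c s * \<iota> (pr g s)) \<le> 1" using Fc(3) s na_nonneg[OF na]
      by (simp add: na_mult[OF na] mult_le_one)
  qed
  have b2: "av (\<Sum>i\<le>d. \<iota> (g i) * (y i - w1 i)) \<le> 1"
  proof (rule na_sum_le[OF na], simp, intro ballI)
    fix i assume i: "i \<in> {..d}"
    have "nK (pr g (\<lambda>k. if k = i then piK ^ n else 0)) \<le> 1"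
      using g pie_in[OF LM, of i] i unfolding dual_def by auto
    hence "nK (g i) * q ^ n \<le> 1" using pr_e[of i g "piK ^ n"] i by (simp add: na_mult[OF naK] nK_pow)
    moreover have "av (y i - w1 i) \<le> q ^ n" using yw by blast
    ultimately have "nK (g i) * av (y i - w1 i) \<le> 1"
      by (meson nK_ge0 mult_left_mono order_trans)
    thus "av (\<iota> (g i) * (y i - w1 i)) \<le> 1" by (simp add: na_mult[OF na] nK_def)
  qed
  have "(\<Sum>i\<le>d. \<iota> (g i) * y i) = (\<Sum>i\<le>d. \<iota> (g i) * w1 i) + (\<Sum>i\<le>d. \<iota> (g i) * (y i - w1 i))"
    by (simp add: sum.distrib[symmetric] algebra_simps)
  thus ?thesis using na_add_le[OF na b1 b2] by simp
qed

lemma flat: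
  assumes U: "lattice_mod \<iota> av piK d n U" and V: "lattice_mod \<iota> av piK d n V"
    and y: "\<forall>i>d. y i = 0"
    and w1: "w1 \<in> O_span \<iota> av U" "\<forall>i. av (y i - w1 i) \<le> q ^ n"
    and w2: "w2 \<in> O_span \<iota> av V" "\<forall>i. av (y i - w2 i) \<le> q ^ n"
  shows "y \<in> O_span \<iota> av (U \<inter> V)"
proof -
  have "\<exists>F c. finite F \<and> F \<subseteq> U \<inter> V \<and> (\<forall>s\<in>F. av (c s) \<le> 1) \<and> y = (\<Sum>s\<in>F. (\<lambda>i. c s * \<iota> (s i)))"
  proof (rule L[OF lm_lat[OF lm_int[OF U V]] na fh])
    show "\<forall>x. av (\<iota> x) = nK x" by (simp add: nK_def)
    show "\<forall>i>d. y i = 0" by (rule y)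
    show "\<forall>f\<in>dual (U \<inter> V). av (\<Sum>i\<le>d. \<iota> (f i) * y i) \<le> 1"
    proof
      fix f assume f: "f \<in> dual (U \<inter> V)"
      obtain g h where gh: "g \<in> dual U" "h \<in> dual V" "f = g + h"
        using dual_split[OF lm_lat[OF U] lm_lat[OF V] f] by blast
      have "(\<Sum>i\<le>d. \<iota> (f i) * y i) = (\<Sum>i\<le>d. \<iota> (g i) * y i) + (\<Sum>i\<le>d. \<iota> (h i) * y i)"
        unfolding gh(3) by (simp add: fh_add[OF fh] sum.distrib[symmetric] distrib_right)
      moreover have "av (\<Sum>i\<le>d. \<iota> (g i) * y i) \<le> 1" by (rule pair_bound[OF U gh(1) w1])
      moreover have "av (\<Sum>i\<le>d. \<iota> (h i) * y i) \<le> 1" by (rule pair_bound[OF V gh(2) w2])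
      ultimately show "av (\<Sum>i\<le>d. \<iota> (f i) * y i) \<le> 1" using na_add_le[OF na] by simp
    qed
  qed
  thus ?thesis unfolding O_span_def by blast
qed

lemma inY_int:
  assumes U: "lattice_mod \<iota> av piK d n U" and V: "lattice_mod \<iota> av piK d n V"
    and x: "\<forall>i>d. x i = 0" and YU: "in_Y \<iota> av piK n x U" and YV: "in_Y \<iota> av piK n x V"
  shows "in_Y \<iota> av piK n x (U \<inter> V)"
  unfolding in_Y_def
proof (intro allI impI)
  fix l assume l: "\<forall>i. av (l * x i) \<le> 1"
  obtain w1 where w1: "w1 \<in> O_span \<iota> av U" "\<forall>i. av (l * x i - w1 i) \<le> q ^ n"
    using YU l unfolding in_Y_def nK_def by blast
  obtain w2 where w2: "w2 \<in> O_span \<iota> av V" "\<forall>i. av (l * x i - w2 i) \<le> q ^ n"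
    using YV l unfolding in_Y_def nK_def by blast
  have "(\<lambda>i. l * x i) \<in> O_span \<iota> av (U \<inter> V)"
    by (rule flat[OF U V _ w1 w2]) (use x in simp)
  moreover have "\<forall>i. av (l * x i - l * x i) \<le> av (\<iota> piK) ^ n"
    using na_0[OF na] na_nonneg[OF na] by simp
  ultimately show "\<exists>w\<in>O_span \<iota> av (U \<inter> V). \<forall>i. av (l * x i - w i) \<le> av (\<iota> piK) ^ n"
    by (intro bexI[of _ "\<lambda>i. l * x i"]) simp_all
qed

end

context pad begin

definition gen :: "nat \<Rightarrow> (nat \<Rightarrow> 'k) set \<Rightarrow> (nat \<Rightarrow> 'k) set" where
  "gen n S = {u + w | u w. u \<in> OK_span \<iota> av S \<and> w \<in> piLam \<iota> av piK d n}"

lemma OK_span_fin: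
  assumes T: "finite T"
  shows "OK_span \<iota> av T = {(\<Sum>t\<in>T. (\<lambda>i. c t * t i)) | c. \<forall>t\<in>T. nK (c t) \<le> 1}"
proof
  show "OK_span \<iota> av T \<subseteq> {(\<Sum>t\<in>T. (\<lambda>i. c t * t i)) | c. \<forall>t\<in>T. nK (c t) \<le> 1}"
  proof
    fix u assume "u \<in> OK_span \<iota> av T"
    then obtain F c where Fc: "u = (\<Sum>s\<in>F. (\<lambda>i. c s * s i))" "finite F" "F \<subseteq> T" "\<forall>s\<in>F. nK (c s) \<le> 1"
      unfolding OK_span_def nK_def by blast
    define c' where "c' = (\<lambda>t. if t \<in> F then c t else 0)"
    have "(\<Sum>t\<in>T. (\<lambda>i. c' t * t i)) = (\<Sum>t\<in>F. (\<lambda>i. c' t * t i))"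
      by (rule sum.mono_neutral_right[OF T Fc(3)]) (auto simp: c'_def zero_fun_def)
    also have "\<dots> = u" unfolding Fc(1) c'_def by (intro sum.cong) auto
    finally have "u = (\<Sum>t\<in>T. (\<lambda>i. c' t * t i))" by simp
    moreover have "\<forall>t\<in>T. nK (c' t) \<le> 1" using Fc(4) nK_0 unfolding c'_def by auto
    ultimately show "u \<in> {(\<Sum>t\<in>T. (\<lambda>i. c t * t i)) | c. \<forall>t\<in>T. nK (c t) \<le> 1}" by blast
  qed
next
  show "{(\<Sum>t\<in>T. (\<lambda>i. c t * t i)) | c. \<forall>t\<in>T. nK (c t) \<le> 1} \<subseteq> OK_span \<iota> av T"
    unfolding OK_span_def nK_def using T by blast
qed

lemma piLam_intro: "v \<in> Lam \<iota> av d \<Longrightarrow> u = (\<lambda>i. piK ^ n * v i) \<Longrightarrow> u \<in> piLam \<iota> av piK d n"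
  unfolding piLam_def by blast

lemma piLam_add: "u \<in> piLam \<iota> av piK d n \<Longrightarrow> v \<in> piLam \<iota> av piK d n \<Longrightarrow> u + v \<in> piLam \<iota> av piK d n"
proof -
  assume "u \<in> piLam \<iota> av piK d n" "v \<in> piLam \<iota> av piK d n"
  then obtain a b where ab: "u = (\<lambda>i. piK ^ n * a i)" "a \<in> Lam \<iota> av d" "v = (\<lambda>i. piK ^ n * b i)" "b \<in> Lam \<iota> av d"
    unfolding piLam_def by blast
  have "a + b \<in> Lam \<iota> av d" using ab(2,4) unfolding Lam_def nK_def[symmetric]
    by (auto intro: na_add_le[OF naK])
  moreover have "u + v = (\<lambda>i. piK ^ n * (a + b) i)" unfolding ab by (simp add: fun_eq_iff distrib_left)
  ultimately show ?thesis unfolding piLam_def by blast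
qed

lemma piLam_smult: "nK c \<le> 1 \<Longrightarrow> u \<in> piLam \<iota> av piK d n \<Longrightarrow> (\<lambda>i. c * u i) \<in> piLam \<iota> av piK d n"
proof -
  assume c: "nK c \<le> 1" and "u \<in> piLam \<iota> av piK d n"
  then obtain a where a: "u = (\<lambda>i. piK ^ n * a i)" "a \<in> Lam \<iota> av d" unfolding piLam_def by blast
  have "(\<lambda>i. c * a i) \<in> Lam \<iota> av d" using a(2) c unfolding Lam_def nK_def[symmetric]
    by (auto simp: na_mult[OF naK] intro: mult_le_one nK_ge0)
  moreover have "(\<lambda>i. c * u i) = (\<lambda>i. piK ^ n * (c * a i))" unfolding a by (simp add: fun_eq_iff mult.left_commute)
  ultimately show ?thesis by (rule piLam_intro)
qed

lemma piLam_0: "0 \<in> piLam \<iota> av piK d n"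
proof -
  have "(0::nat\<Rightarrow>'k) \<in> Lam \<iota> av d" unfolding Lam_def nK_def[symmetric] using nK_0 by simp
  moreover have "(0::nat\<Rightarrow>'k) = (\<lambda>i. piK ^ n * (0::nat\<Rightarrow>'k) i)" by (simp add: fun_eq_iff)
  ultimately show ?thesis by (rule piLam_intro)
qed

lemma gen_intro:
  assumes "finite T" "\<forall>t\<in>T. nK (c t) \<le> 1" "w \<in> piLam \<iota> av piK d n"
  shows "(\<Sum>t\<in>T. (\<lambda>i. c t * t i)) + w \<in> gen n T"
  unfolding gen_def OK_span_fin[OF assms(1)] using assms(2,3) by blast

lemma gen_add:
  assumes T: "finite T" and u: "u \<in> gen n T" and v: "v \<in> gen n T" shows "u + v \<in> gen n T"
proof -
  obtain c w c' w' where cw: "u = (\<Sum>t\<in>T. (\<lambda>i. c t * t i)) + w" "\<forall>t\<in>T. nK (c t) \<le> 1" "w \<in> piLam \<iota> av piK d n"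
    "v = (\<Sum>t\<in>T. (\<lambda>i. c' t * t i)) + w'" "\<forall>t\<in>T. nK (c' t) \<le> 1" "w' \<in> piLam \<iota> av piK d n"
    using u v unfolding gen_def OK_span_fin[OF T] by blast
  have "u + v = (\<Sum>t\<in>T. (\<lambda>i. (c t + c' t) * t i)) + (w + w')"
    unfolding cw(1,4) by (simp add: fun_eq_iff sum_app sum.distrib distrib_right algebra_simps)
  moreover have "\<forall>t\<in>T. nK (c t + c' t) \<le> 1" using cw(2,5) by (auto intro: na_add_le[OF naK])
  moreover have "w + w' \<in> piLam \<iota> av piK d n" using piLam_add cw(3,6) by blast
  ultimately show ?thesis using gen_intro[OF T, of "\<lambda>t. c t + c' t" "w + w'"] by simp
qed

lemma gen_smult:
  assumes T: "finite T" and a: "nK a \<le> 1" and u: "u \<in> gen n T" shows "(\<lambda>i. a * u i) \<in> gen n T"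
proof -
  obtain c w where cw: "u = (\<Sum>t\<in>T. (\<lambda>i. c t * t i)) + w" "\<forall>t\<in>T. nK (c t) \<le> 1" "w \<in> piLam \<iota> av piK d n"
    using u unfolding gen_def OK_span_fin[OF T] by blast
  have "(\<lambda>i. a * u i) = (\<Sum>t\<in>T. (\<lambda>i. (a * c t) * t i)) + (\<lambda>i. a * w i)"
    unfolding cw(1) by (simp add: fun_eq_iff sum_app sum_distrib_left distrib_left mult.assoc)
  moreover have "\<forall>t\<in>T. nK (a * c t) \<le> 1" using cw(2) a by (auto simp: na_mult[OF naK] intro: mult_le_one nK_ge0)
  moreover have "(\<lambda>i. a * w i) \<in> piLam \<iota> av piK d n" using piLam_smult a cw(3) by blast
  ultimately show ?thesis using gen_intro[OF T, of "\<lambda>t. a * c t" "\<lambda>i. a * w i"] by simp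
qed

lemma gen_piLam: "w \<in> piLam \<iota> av piK d n \<Longrightarrow> w \<in> gen n T"
proof -
  assume w: "w \<in> piLam \<iota> av piK d n"
  have "(0::nat\<Rightarrow>'k) \<in> OK_span \<iota> av T"
    unfolding OK_span_def by (intro CollectI exI[of _ "{}"]) (auto simp: zero_fun_def)
  moreover have "w = 0 + w" by simp
  ultimately show ?thesis unfolding gen_def using w by blast
qed

lemma gen_mem: assumes "s \<in> T" shows "s \<in> gen n T"
proof -
  have "(\<Sum>t\<in>{s}. (\<lambda>i. (\<lambda>_. 1) t * t i)) \<in> OK_span \<iota> av T"
    unfolding OK_span_def using assms na_1[OF na] fh_1[OF fh] by (intro CollectI exI[of _ "{s}"] exI[of _ "\<lambda>_. 1"]) auto
  hence "s \<in> OK_span \<iota> av T" by simp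
  moreover have "s = s + 0" by simp
  ultimately show ?thesis unfolding gen_def using piLam_0 by blast
qed

lemma gen_mono: "S \<subseteq> T \<Longrightarrow> gen n S \<subseteq> gen n T"
  unfolding gen_def OK_span_def by blast

lemma gen_le:
  assumes N: "lattice_mod \<iota> av piK d n N" and S: "finite S" "S \<subseteq> N"
  shows "gen n S \<subseteq> N"
proof
  fix u assume "u \<in> gen n S"
  then obtain c w where cw: "u = (\<Sum>t\<in>S. (\<lambda>i. c t * t i)) + w" "\<forall>t\<in>S. nK (c t) \<le> 1" "w \<in> piLam \<iota> av piK d n"
    unfolding gen_def OK_span_fin[OF S(1)] by blast
  have "(\<Sum>t\<in>S. (\<lambda>i. c t * t i)) \<in> N" using lat_sum[OF lm_lat[OF N], of S c "\<lambda>t. t"] cw(2) S(2) by auto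
  moreover have "w \<in> N" using cw(3) N unfolding lattice_mod_def by blast
  ultimately show "u \<in> N" unfolding cw(1) using lat_add[OF lm_lat[OF N]] by blast
qed

lemma gen_insert:
  assumes T: "finite T" and s: "s \<notin> T" and u: "u \<in> gen n (insert s T)"
  shows "\<exists>a m. nK a \<le> 1 \<and> m \<in> gen n T \<and> u = (\<lambda>i. a * s i) + m"
proof -
  have T': "finite (insert s T)" using T by simp
  obtain c w where cw: "u = (\<Sum>t\<in>insert s T. (\<lambda>i. c t * t i)) + w" "\<forall>t\<in>insert s T. nK (c t) \<le> 1" "w \<in> piLam \<iota> av piK d n"
    using u unfolding gen_def OK_span_fin[OF T'] by blast
  have "u = (\<lambda>i. c s * s i) + ((\<Sum>t\<in>T. (\<lambda>i. c t * t i)) + w)"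
    unfolding cw(1) using sum.insert[OF T s, of "\<lambda>t. (\<lambda>i. c t * t i)"] by (simp add: add.assoc)
  moreover have "(\<Sum>t\<in>T. (\<lambda>i. c t * t i)) + w \<in> gen n T"
    unfolding gen_def OK_span_fin[OF T] using cw(2,3) by blast
  ultimately show ?thesis using cw(2) by blast
qed

end

context pad begin

lemma gen_empty: "gen n {} = piLam \<iota> av piK d n"
proof
  show "gen n {} \<subseteq> piLam \<iota> av piK d n"
    unfolding gen_def OK_span_fin[OF finite.emptyI] by auto
  show "piLam \<iota> av piK d n \<subseteq> gen n {}" using gen_piLam by blast
qed

lemma gen_sub:
  assumes T: "finite T"
  shows "lattice_mod \<iota> av piK d n N \<Longrightarrow> N \<subseteq> gen n T \<Longrightarrow>
    \<exists>S. finite S \<and> S \<subseteq> N \<and> card S \<le> card T \<and> N = gen n S"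
  using T
proof (induction T arbitrary: N rule: finite_induct)
  case empty
  have "N = gen n {}"
    using empty gen_empty unfolding lattice_mod_def by auto
  thus ?case by (intro exI[of _ "{}"]) auto
next
  case (insert s T)
  note N = insert.prems(1)
  define G where "G = gen n T"
  define I where "I = {a. nK a \<le> 1 \<and> (\<exists>m\<in>G. (\<lambda>i. a * s i) + m \<in> N)}"
  have decomp: "\<exists>a m. a \<in> I \<and> m \<in> G \<and> b = (\<lambda>i. a * s i) + m" if b: "b \<in> N" for b
  proof -
    obtain a m where am: "nK a \<le> 1" "m \<in> G" "b = (\<lambda>i. a * s i) + m"
      using gen_insert[OF insert.hyps(1,2)] b insert.prems(2) unfolding G_def by blast
    hence "a \<in> I" unfolding I_def using b by blast
    thus ?thesis using am by blast
  qed
  have Gadd: "u \<in> G \<Longrightarrow> v \<in> G \<Longrightarrow> u + v \<in> G" for u v unfolding G_def using gen_add[OF insert.hyps(1)] by blast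
  have Gsm: "nK c \<le> 1 \<Longrightarrow> u \<in> G \<Longrightarrow> (\<lambda>i. c * u i) \<in> G" for c u unfolding G_def using gen_smult[OF insert.hyps(1)] by blast
  have GpL: "piLam \<iota> av piK d n \<subseteq> G" unfolding G_def using gen_piLam by blast
  show ?case
  proof (cases "\<forall>a\<in>I. a = 0")
    case True
    have "N \<subseteq> G"
    proof
      fix b assume "b \<in> N"
      then obtain a m where "a \<in> I" "m \<in> G" "b = (\<lambda>i. a * s i) + m" using decomp by blast
      moreover hence "a = 0" using True by blast
      ultimately show "b \<in> G" by (simp add: zero_fun_def[symmetric])
    qed
    then obtain S where S: "finite S" "S \<subseteq> N" "card S \<le> card T" "N = gen n S"
      using insert.IH[OF N] unfolding G_def by blast
    moreover have "card T \<le> card (insert s T)" using insert.hyps by simp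
    ultimately show ?thesis by (intro exI[of _ S]) auto
  next
    case False
    then obtain a1 where a1: "a1 \<in> I" "a1 \<noteq> 0" by blast
    have "\<forall>x\<in>I. nK x \<le> 1" unfolding I_def by blast
    then obtain a0 where a0: "a0 \<in> I" "a0 \<noteq> 0" "\<forall>x\<in>I. nK x \<le> nK a0"
      using exists_max[OF a1] by blast
    obtain m0 where m0: "m0 \<in> G" "(\<lambda>i. a0 * s i) + m0 \<in> N" using a0(1) unfolding I_def by blast
    define n0 where "n0 = (\<lambda>i. a0 * s i) + m0"
    define N' where "N' = N \<inter> G"
    have LN: "is_lat N" by (rule lm_lat[OF N])
    have N': "lattice_mod \<iota> av piK d n N'"
      unfolding lattice_mod_def N'_def
    proof (intro conjI)
      show "N \<inter> G \<subseteq> Lam \<iota> av d" using N unfolding lattice_mod_def by blast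
      show "piLam \<iota> av piK d n \<subseteq> N \<inter> G" using N GpL unfolding lattice_mod_def by blast
      show "0 \<in> N \<inter> G" using lat_0[OF LN] GpL piLam_0 by blast
      show "\<forall>u\<in>N \<inter> G. \<forall>v\<in>N \<inter> G. u + v \<in> N \<inter> G" using lat_add[OF LN] Gadd by blast
      show "\<forall>c u. av (\<iota> c) \<le> 1 \<longrightarrow> u \<in> N \<inter> G \<longrightarrow> (\<lambda>i. c * u i) \<in> N \<inter> G"
        using lat_smult[OF LN] Gsm unfolding nK_def by blast
    qed
    obtain S' where S': "finite S'" "S' \<subseteq> N'" "card S' \<le> card T" "N' = gen n S'"
      using insert.IH[OF N'] unfolding N'_def G_def by blast
    define S where "S = insert n0 S'"
    have fS: "finite S" unfolding S_def using S'(1) by simp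
    have SN: "S \<subseteq> N" unfolding S_def using S'(2) m0(2) unfolding N'_def n0_def by blast
    have cS: "card S \<le> card (insert s T)"
      unfolding S_def using S'(1,3) insert.hyps card_insert_le_m1
      by (simp add: card_insert_if)
    have "N = gen n S"
    proof
      show "gen n S \<subseteq> N" by (rule gen_le[OF N fS SN])
      show "N \<subseteq> gen n S"
      proof
        fix b assume b: "b \<in> N"
        then obtain a m where am: "a \<in> I" "m \<in> G" "b = (\<lambda>i. a * s i) + m" using decomp by blast
        define cc where "cc = a / a0"
        have nka: "nK a \<le> nK a0" using a0(3) am(1) by blast
        have nka0: "nK a0 > 0" using a0(2) nK_ge0 na_zero_iff[OF naK] by (metis less_eq_real_def)
        have cc1: "nK cc \<le> 1" unfolding cc_def na_divide[OF naK] using nka nka0 by simp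
        have mcc: "nK (- cc) \<le> 1" using cc1 na_uminus[OF naK] by simp
        define b' where "b' = b + (\<lambda>i. (- cc) * n0 i)"
        have b'N: "b' \<in> N" unfolding b'_def using lat_add[OF LN b lat_smult[OF LN mcc m0(2)[folded n0_def]]] .
        have "b' = m + (\<lambda>i. (- cc) * m0 i)"
          unfolding b'_def am(3) n0_def cc_def using a0(2) by (simp add: fun_eq_iff field_simps)
        hence b'G: "b' \<in> G" using Gadd Gsm[OF mcc m0(1)] am(2) by simp
        have "b' \<in> gen n S'" using b'N b'G S'(4) unfolding N'_def by blast
        hence b'S: "b' \<in> gen n S" using gen_mono[of S' S n] unfolding S_def by blast
        have n0S: "n0 \<in> gen n S" unfolding S_def by (rule gen_mem) simp
        have "b = b' + (\<lambda>i. cc * n0 i)" unfolding b'_def by (simp add: fun_eq_iff)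
        thus "b \<in> gen n S" using gen_add[OF fS b'S gen_smult[OF fS cc1 n0S]] by simp
      qed
    qed
    thus ?thesis using fS SN cS by blast
  qed
qed

lemma pr_e': "i \<le> d \<Longrightarrow> pr (\<lambda>k. if k = i then c else 0) u = c * u i"
  using pr_e[of i u c] pr_comm[of "\<lambda>k. if k = i then c else 0" u] by (simp add: mult.commute)

lemma e_inj: "inj_on (\<lambda>i. (\<lambda>k. if k = i then (1::'k) else 0)) {..d}"
proof (rule inj_onI)
  fix i j assume e: "(\<lambda>k. if k = i then (1::'k) else 0) = (\<lambda>k. if k = j then 1 else 0)"
  have "(if i = i then (1::'k) else 0) = (if i = j then 1 else 0)" using fun_cong[OF e, of i] by simp
  thus "i = j" by (simp split: if_splits)
qed

lemma Lam_gen: "Lam \<iota> av d \<subseteq> gen n ((\<lambda>i. (\<lambda>k. if k = i then (1::'k) else 0)) ` {..d})"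
proof
  fix v assume v: "v \<in> Lam \<iota> av d"
  define E where "E = (\<lambda>i::nat. (\<lambda>k. if k = i then (1::'k) else 0))"
  define c where "c = (\<lambda>t. pr t v)"
  have fT: "finite (E ` {..d})" by simp
  have "(\<Sum>t\<in>E ` {..d}. (\<lambda>i. c t * t i)) = (\<Sum>j\<le>d. (\<lambda>i. c (E j) * E j i))"
    by (rule sum.reindex[OF e_inj[folded E_def], unfolded o_def])
  also have "\<dots> = (\<Sum>j\<le>d. (\<lambda>i. v j * E j i))"
    by (intro sum.cong refl) (simp add: c_def E_def pr_e')
  also have "\<dots> = v"
  proof
    fix i
    have "(\<Sum>j\<le>d. (\<lambda>i. v j * E j i)) i = (\<Sum>j\<le>d. if i = j then v j else 0)"
      unfolding sum_app E_def by (intro sum.cong) auto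
    also have "\<dots> = v i" using Lam_Vd[OF v, of i] by (cases "i \<le> d") auto
    finally show "(\<Sum>j\<le>d. (\<lambda>i. v j * E j i)) i = v i" .
  qed
  finally have ve: "v = (\<Sum>t\<in>E ` {..d}. (\<lambda>i. c t * t i)) + 0" by simp
  have "\<forall>t\<in>E ` {..d}. nK (c t) \<le> 1"
    using Lam_nK[OF v] by (auto simp: c_def E_def pr_e')
  thus "v \<in> gen n (E ` {..d})" by (subst ve, intro gen_intro[OF fT] piLam_0)
qed

lemma gen_exists:
  assumes N: "lattice_mod \<iota> av piK d n N"
  shows "\<exists>S. finite S \<and> S \<subseteq> N \<and> N = gen n S"
proof -
  let ?T = "(\<lambda>i. (\<lambda>k. if k = i then (1::'k) else 0)) ` {..d}"
  have "N \<subseteq> Lam \<iota> av d" using N unfolding lattice_mod_def by blast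
  hence "N \<subseteq> gen n ?T" using Lam_gen[of n] by (rule subset_trans)
  moreover have "finite ?T" by simp
  ultimately obtain S where "finite S" "S \<subseteq> N" "N = gen n S" using gen_sub[of ?T n N] N by blast
  thus ?thesis by blast
qed

lemma rk'_le:
  assumes U: "lattice_mod \<iota> av piK d n U" and N: "lattice_mod \<iota> av piK d n N" and NU: "N \<subseteq> U"
  shows "rk' \<iota> av piK d n N \<le> rk' \<iota> av piK d n U"
proof -
  let ?P = "\<lambda>M r. \<exists>S. finite S \<and> S \<subseteq> M \<and> card S = r \<and> M = gen n S"
  have rk'_eq: "rk' \<iota> av piK d n M = (LEAST r. ?P M r)" for M
    unfolding rk'_def gen_def by simp
  obtain S0 where S0: "finite S0" "S0 \<subseteq> U" "U = gen n S0" using gen_exists[OF U] by blast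
  have "?P U (card S0)" using S0 by blast
  hence "?P U (LEAST r. ?P U r)" by (rule LeastI)
  then obtain SU where SU: "finite SU" "SU \<subseteq> U" "card SU = rk' \<iota> av piK d n U" "U = gen n SU"
    unfolding rk'_eq by blast
  obtain SN where SN: "finite SN" "SN \<subseteq> N" "card SN \<le> card SU" "N = gen n SN"
    using gen_sub[OF SU(1) N] NU SU(4) by blast
  have "?P N (card SN)" using SN by blast
  hence "(LEAST r. ?P N r) \<le> card SN" by (rule Least_le)
  thus ?thesis using SN(3) SU(3) unfolding rk'_eq by simp
qed

end

context pad begin

lemma piLam1_char:
  assumes "u \<in> Lam \<iota> av d" "\<forall>i. nK (u i) \<le> q"
  shows "u \<in> piLam \<iota> av piK d 1"
proof -
  define v where "v = (\<lambda>i. u i / piK)"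
  have "v \<in> Lam \<iota> av d"
    unfolding Lam_def nK_def[symmetric]
  proof (intro CollectI conjI allI impI)
    fix i show "nK (v i) \<le> 1" unfolding v_def na_divide[OF naK] using assms(2) q_pos by simp
  next
    fix i assume "d < i" thus "v i = 0" unfolding v_def using Lam_Vd[OF assms(1)] by simp
  qed
  moreover have "u = (\<lambda>i. piK ^ 1 * v i)" unfolding v_def using piK_nz by (simp add: fun_eq_iff)
  ultimately show ?thesis by (rule piLam_intro)
qed

lemma red_card_bound: "\<exists>N. \<forall>S. finite S \<and> S \<subseteq> Lam \<iota> av d \<and> red_indep \<iota> av piK d S \<longrightarrow> card S \<le> N"
proof -
  have "\<exists>R. finite R \<and> (\<forall>r\<in>R. av (\<iota> r) \<le> 1) \<and> (\<forall>x. av (\<iota> x) \<le> 1 \<longrightarrow> (\<exists>r\<in>R. av (\<iota> (x - r)) < 1))"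
    using pl unfolding p_adic_local_field_def by (elim conjE) assumption
  then obtain R where R: "finite R" "\<forall>r\<in>R. nK r \<le> 1" "\<forall>x. nK x \<le> 1 \<longrightarrow> (\<exists>r\<in>R. nK (x - r) < 1)"
    unfolding nK_def by blast
  define ch where "ch = (\<lambda>x. SOME r. r \<in> R \<and> nK (x - r) < 1)"
  have ch: "ch x \<in> R \<and> nK (x - ch x) < 1" if "nK x \<le> 1" for x
  proof -
    have "\<exists>r. r \<in> R \<and> nK (x - r) < 1" using R(3) that by blast
    thus ?thesis unfolding ch_def by (rule someI_ex)
  qed
  define \<phi> where "\<phi> = (\<lambda>s::nat\<Rightarrow>'k. (\<lambda>i. if i \<le> d then ch (s i) else 0))"
  define RF where "RF = (\<lambda>g. (\<lambda>i. if i \<le> d then g i else (0::'k))) ` (PiE {..d} (\<lambda>_. R))"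
  have fRF: "finite RF" unfolding RF_def using R(1) by (simp add: finite_PiE)
  have \<phi>RF: "\<phi> s \<in> RF" if "s \<in> Lam \<iota> av d" for s
  proof -
    have "restrict (\<lambda>i. ch (s i)) {..d} \<in> PiE {..d} (\<lambda>_. R)" using ch Lam_nK[OF that] by auto
    moreover have "\<phi> s = (\<lambda>i. if i \<le> d then restrict (\<lambda>i. ch (s i)) {..d} i else 0)"
      unfolding \<phi>_def by (simp add: fun_eq_iff)
    ultimately show ?thesis unfolding RF_def by blast
  qed
  have "card S \<le> card RF" if S: "finite S" "S \<subseteq> Lam \<iota> av d" "red_indep \<iota> av piK d S" for S
  proof -
    have "inj_on \<phi> S"
    proof (rule inj_onI, rule ccontr)
      fix s s' assume s: "s \<in> S" and s': "s' \<in> S" and eq: "\<phi> s = \<phi> s'" and ne: "s \<noteq> s'"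
      have sL: "s \<in> Lam \<iota> av d" and s'L: "s' \<in> Lam \<iota> av d" using S s s' by auto
      have small: "nK (s i - s' i) \<le> q" for i
      proof (cases "i \<le> d")
        case True
        have e: "ch (s i) = ch (s' i)" using fun_cong[OF eq, of i] True unfolding \<phi>_def by simp
        have "nK (s i - ch (s i)) < 1" "nK (s' i - ch (s' i)) < 1"
          using ch Lam_nK[OF sL] Lam_nK[OF s'L] by auto
        hence "nK ((s i - ch (s i)) - (s' i - ch (s i))) < 1"
          using e na_diff[OF naK, of "s i - ch (s i)" "s' i - ch (s i)"] by simp
        hence "nK (s i - s' i) < 1" by simp
        thus ?thesis by (rule nK_lt1)
      next
        case False thus ?thesis using Lam_Vd[OF sL] Lam_Vd[OF s'L] nK_0 q_pos by simp
      qed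
      have diffL: "(\<lambda>i. s i - s' i) \<in> Lam \<iota> av d"
        unfolding Lam_def nK_def[symmetric]
        using small q_lt1 Lam_Vd[OF sL] Lam_Vd[OF s'L] by (auto intro: order_trans[OF _ less_imp_le[OF q_lt1]])
      have inpi: "(\<lambda>i. s i - s' i) \<in> piLam \<iota> av piK d 1"
        by (rule piLam1_char[OF diffL]) (use small in simp)
      define c where "c = (\<lambda>t. if t = s then (1::'k) else if t = s' then -1 else 0)"
      have "\<forall>t\<in>S. av (\<iota> (c t)) \<le> 1"
        unfolding c_def nK_def[symmetric] using nK_0 nK_1 na_m1[OF naK] by auto
      moreover have "(\<Sum>t\<in>S. (\<lambda>i. c t * t i)) = (\<lambda>i. s i - s' i)"
      proof
        fix i
        have "(\<Sum>t\<in>S. (\<lambda>i. c t * t i)) i = (\<Sum>t\<in>S. (if t = s then s i else 0) + (if t = s' then - s' i else 0))"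
          unfolding sum_app c_def using ne by (intro sum.cong) auto
        also have "\<dots> = s i - s' i" using S(1) s s' by (simp add: sum.distrib)
        finally show "(\<Sum>t\<in>S. (\<lambda>i. c t * t i)) i = s i - s' i" .
      qed
      ultimately have c1: "\<forall>t\<in>S. av (\<iota> (c t)) \<le> 1" and c2: "(\<Sum>t\<in>S. (\<lambda>i. c t * t i)) \<in> piLam \<iota> av piK d 1"
        using inpi by auto
      have ri: "\<forall>c. (\<forall>s\<in>S. av (\<iota> (c s)) \<le> 1) \<longrightarrow> (\<Sum>s\<in>S. (\<lambda>i. c s * s i)) \<in> piLam \<iota> av piK d 1
          \<longrightarrow> (\<forall>s\<in>S. av (\<iota> (c s)) < 1)" using S(3) unfolding red_indep_def .
      have "\<forall>t\<in>S. av (\<iota> (c t)) < 1" using mp[OF mp[OF spec[OF ri, of c] c1] c2] .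
      hence "nK (c s) < 1" using s unfolding nK_def by blast
      thus False unfolding c_def using nK_1 by simp
    qed
    moreover have "\<phi> ` S \<subseteq> RF" using \<phi>RF S(2) by blast
    ultimately show ?thesis using card_inj_on_le fRF by blast
  qed
  thus ?thesis by blast
qed

lemma rk_ge1:
  assumes M: "M \<subseteq> Lam \<iota> av d" and s: "s \<in> M" and ns: "s \<notin> piLam \<iota> av piK d 1"
  shows "rk \<iota> av piK d M \<ge> 1"
proof -
  obtain N where N: "\<forall>S. finite S \<and> S \<subseteq> Lam \<iota> av d \<and> red_indep \<iota> av piK d S \<longrightarrow> card S \<le> N"
    using red_card_bound by blast
  let ?A = "{card S | S. finite S \<and> S \<subseteq> M \<and> red_indep \<iota> av piK d S}"
  have fA: "finite ?A"
    by (rule finite_subset[of _ "{..N}"]) (use N M in auto)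
  have sL: "s \<in> Lam \<iota> av d" using s M by blast
  have "red_indep \<iota> av piK d {s}"
    unfolding red_indep_def
  proof (intro allI impI ballI)
    fix c t assume c: "\<forall>t\<in>{s}. av (\<iota> (c t)) \<le> 1" and sm: "(\<Sum>t\<in>{s}. (\<lambda>i. c t * t i)) \<in> piLam \<iota> av piK d 1"
      and t: "t \<in> {s}"
    show "av (\<iota> (c t)) < 1"
    proof (rule ccontr)
      assume "\<not> av (\<iota> (c t)) < 1"
      hence c1: "nK (c s) = 1" using c t unfolding nK_def by auto
      hence cnz: "c s \<noteq> 0" using nK_0 by auto
      obtain v where v: "(\<lambda>i. c s * s i) = (\<lambda>i. piK ^ 1 * v i)" "v \<in> Lam \<iota> av d"
        using sm unfolding piLam_def by auto
      have "(\<lambda>i. v i / c s) \<in> Lam \<iota> av d"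
        using v(2) c1 unfolding Lam_def nK_def[symmetric] by (auto simp: na_divide[OF naK])
      moreover have "s = (\<lambda>i. piK ^ 1 * (v i / c s))"
      proof
        fix i have "c s * s i = piK * v i" using fun_cong[OF v(1), of i] by simp
        thus "s i = piK ^ 1 * (v i / c s)" using cnz by (simp add: field_simps)
      qed
      ultimately have "s \<in> piLam \<iota> av piK d 1" by (rule piLam_intro)
      thus False using ns by blast
    qed
  qed
  hence "card {s} \<in> ?A" using s by blast
  hence "card {s} \<le> Max ?A" using fA by (rule Max_ge[rotated])
  thus ?thesis unfolding rk_def by simp
qed

lemma exists_unit:
  assumes n: "n \<ge> 1" and x: "\<forall>i>d. x i = 0" "x \<noteq> 0"
    and Y: "in_Y \<iota> av piK n x M"
  shows "\<exists>s\<in>M. s \<notin> piLam \<iota> av piK d 1"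
proof -
  obtain j where j: "x j \<noteq> 0" using x(2) by (auto simp: fun_eq_iff)
  have jd: "j \<le> d" using j x(1) by (meson not_le)
  obtain i0 where i0: "i0 \<le> d" "\<forall>i\<le>d. av (x i) \<le> av (x i0)"
  proof -
    have "finite ((\<lambda>i. av (x i)) ` {..d})" "(\<lambda>i. av (x i)) ` {..d} \<noteq> {}" by auto
    from Max_in[OF this] obtain i0 where "i0 \<in> {..d}" "Max ((\<lambda>i. av (x i)) ` {..d}) = av (x i0)" by blast
    moreover have "\<forall>i\<le>d. av (x i) \<le> Max ((\<lambda>i. av (x i)) ` {..d})" by simp
    ultimately show ?thesis using that by auto
  qed
  have pos: "av (x i0) > 0"
  proof -
    have "av (x j) > 0" using j na_zero_iff[OF na] na_nonneg[OF na] by (metis less_eq_real_def)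
    thus ?thesis using i0(2) jd by (meson less_le_trans)
  qed
  hence xi0: "x i0 \<noteq> 0" using na_0[OF na] by auto
  define l where "l = inverse (x i0)"
  have l: "\<forall>i. av (l * x i) \<le> 1"
  proof
    fix i show "av (l * x i) \<le> 1"
    proof (cases "i \<le> d")
      case True
      have "av (l * x i) = av (x i) / av (x i0)" unfolding l_def
        by (simp add: na_mult[OF na] na_inverse[OF na] divide_inverse mult.commute)
      thus ?thesis using i0(2) True pos by simp
    next
      case False thus ?thesis using x(1) na_0[OF na] by simp
    qed
  qed
  obtain w where w: "w \<in> O_span \<iota> av M" "\<forall>i. av (l * x i - w i) \<le> av (\<iota> piK) ^ n"
    using Y l unfolding in_Y_def by blast
  obtain F c where Fc: "finite F" "F \<subseteq> M" "\<forall>s\<in>F. av (c s) \<le> 1" "w = (\<Sum>s\<in>F. (\<lambda>i. c s * \<iota> (s i)))"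
    using w(1) unfolding O_span_def by blast
  show ?thesis
  proof (rule ccontr)
    assume "\<not> (\<exists>s\<in>M. s \<notin> piLam \<iota> av piK d 1)"
    hence allpi: "\<forall>s\<in>F. s \<in> piLam \<iota> av piK d 1" using Fc(2) by blast
    have "av (w i0) \<le> q"
    proof -
      have "w i0 = (\<Sum>s\<in>F. c s * \<iota> (s i0))" unfolding Fc(4) sum_app by simp
      moreover have "av (\<Sum>s\<in>F. c s * \<iota> (s i0)) \<le> q"
      proof (rule na_sum_le[OF na])
        show "0 \<le> q" using q_pos by simp
        show "\<forall>s\<in>F. av (c s * \<iota> (s i0)) \<le> q"
        proof
          fix s assume sF: "s \<in> F"
          then obtain v where v: "s = (\<lambda>i. piK ^ 1 * v i)" "v \<in> Lam \<iota> av d"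
            using allpi unfolding piLam_def by blast
          have "av (\<iota> (s i0)) = q * nK (v i0)" unfolding v(1) nK_def by (simp add: fh_mult[OF fh] na_mult[OF na])
          also have "\<dots> \<le> q" using Lam_nK[OF v(2)] q_pos by (intro mult_left_le) auto
          finally have "av (\<iota> (s i0)) \<le> q" .
          moreover have "av (c s) \<le> 1" using Fc(3) sF by blast
          ultimately show "av (c s * \<iota> (s i0)) \<le> q" using na_nonneg[OF na] q_pos
            by (simp add: na_mult[OF na]) (metis mult_le_one mult_right_mono mult_1 order_trans mult.commute)
        qed
      qed
      ultimately show ?thesis by simp
    qed
    moreover have "av (l * x i0 - w i0) \<le> q"
    proof -
      have "q ^ n \<le> q ^ 1" using n q_pos q_lt1 by (intro power_decreasing) auto
      thus ?thesis using w(2) unfolding nK_def by (metis order_trans power_one_right)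
    qed
    moreover have "l * x i0 = 1" unfolding l_def using xi0 by simp
    ultimately have "av (1::'c) \<le> q"
      using na_add_le[OF na, of "1 - w i0" q "w i0"] by simp
    thus False using na_1[OF na] q_lt1 by simp
  qed
qed

end

context pad begin

lemma lm_n0: "lattice_mod \<iota> av piK d 0 M \<Longrightarrow> M = Lam \<iota> av d"
proof -
  assume L: "lattice_mod \<iota> av piK d 0 M"
  have "piLam \<iota> av piK d 0 = Lam \<iota> av d" unfolding piLam_def by auto
  thus ?thesis using L unfolding lattice_mod_def by auto
qed

lemma int_closed:
  assumes x: "\<forall>i>d. x i = 0" "x \<noteq> 0"
    and U: "U \<in> Tpos \<iota> av piK d n" "in_Y \<iota> av piK n x U"
    and V: "V \<in> Tpos \<iota> av piK d n" "in_Y \<iota> av piK n x V"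
  shows "U \<inter> V \<in> Tpos \<iota> av piK d n \<and> in_Y \<iota> av piK n x (U \<inter> V)"
proof (cases "n = 0")
  case True
  have "U = Lam \<iota> av d" "V = Lam \<iota> av d" using U(1) V(1) lm_n0 True unfolding Tpos_def by auto
  thus ?thesis using U by simp
next
  case False
  hence n1: "n \<ge> 1" by simp
  have LU: "lattice_mod \<iota> av piK d n U" and LV: "lattice_mod \<iota> av piK d n V"
    using U(1) V(1) unfolding Tpos_def by auto
  have LI: "lattice_mod \<iota> av piK d n (U \<inter> V)" by (rule lm_int[OF LU LV])
  have YI: "in_Y \<iota> av piK n x (U \<inter> V)" by (rule inY_int[OF LU LV x(1) U(2) V(2)])
  have "rk' \<iota> av piK d n (U \<inter> V) \<le> rk' \<iota> av piK d n U" by (rule rk'_le[OF LU LI]) blast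
  moreover have "rk' \<iota> av piK d n U \<le> d" using U(1) unfolding Tpos_def by auto
  ultimately have r': "rk' \<iota> av piK d n (U \<inter> V) \<le> d" by simp
  obtain s where s: "s \<in> U \<inter> V" "s \<notin> piLam \<iota> av piK d 1" using exists_unit[OF n1 x YI] by blast
  have "U \<inter> V \<subseteq> Lam \<iota> av d" using LI unfolding lattice_mod_def by blast
  hence "rk \<iota> av piK d (U \<inter> V) \<ge> 1" using rk_ge1 s by blast
  thus ?thesis using LI r' YI unfolding Tpos_def by blast
qed

end

lemma Inter_closed:
  assumes cl: "\<And>U V. U \<in> C \<Longrightarrow> V \<in> C \<Longrightarrow> U \<inter> V \<in> C"
  shows "finite F \<Longrightarrow> F \<noteq> {} \<Longrightarrow> F \<subseteq> C \<Longrightarrow> \<Inter>F \<in> C"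
proof (induction F rule: finite_ne_induct)
  case (singleton x) thus ?case by simp
next
  case (insert x F) thus ?case using cl by simp
qed

theorem mainTheorem13:
  fixes \<iota> :: "'k::field_char_0 \<Rightarrow> 'c::field" and av :: "'c \<Rightarrow> real" and piK :: 'k
    and d n :: nat and x :: "nat \<Rightarrow> 'c"
  assumes "nonarch_abs av" and "field_hom \<iota>"
    and "p_adic_local_field \<iota> av piK" and "is_Cp \<iota> av"
    and "\<forall>i>d. x i = 0" and "x \<noteq> 0"
    and "{M \<in> Tpos \<iota> av piK d n. in_Y \<iota> av piK n x M} \<noteq> {}"
  shows "contractible_space (order_complex_top {M \<in> Tpos \<iota> av piK d n. in_Y \<iota> av piK n x M})"
proof -
  interpret pad \<iota> av piK d by unfold_locales (use assms in auto)
  define C where "C = {M \<in> Tpos \<iota> av piK d n. in_Y \<iota> av piK n x M}"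
  show ?thesis
  proof (cases "finite C")
    case False thus ?thesis unfolding C_def by (rule oc_empty)
  next
    case True
    have cl: "U \<inter> V \<in> C" if "U \<in> C" "V \<in> C" for U V
      using int_closed[OF assms(5,6), of U n V] that unfolding C_def by blast
    have mC: "\<Inter>C \<in> C" using Inter_closed[OF cl True] assms(7) unfolding C_def by blast
    have "contractible_space (order_complex_top C)"
      by (rule oc_cone[OF True mC]) blast
    thus ?thesis unfolding C_def .
  qed
qed


end
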